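(* There is an uncountable collection $\mathcal{C}_1$ of classification functions $f:[0,1]^d\to\{0,1\}$ (with fixed $d\geq 2$) such that the following holds. For any neural network dimensions $\mathbf{N}=(N_L=1,N_{L-1},\dots,N_1,N_0=d)$ with $L\geq 2$, any integer $r\geq 3(N_1+1)\cdots(N_{L-1}+1)$, any $\epsilon>0$, $\hat\epsilon\in(0,1/2)$ and cost function $\mathcal{R}\in\mathcal{CF}^{\epsilon,\hat\epsilon}_r$, any randomised algorithm $\Gamma$, and any $\mathrm{p}\in[0,1/2)$, there is an uncountable collection $\mathcal{C}_2$ of training sets $\mathcal{T}=\{x^1,\dots,x^r\}\in\mathcal{S}^f_{\varepsilon'(r)}$ such that for each $\mathcal{T}\in\mathcal{C}_2$ the set $$\operatorname{argmin}_{\epsilon,\ \varphi\in\mathcal{NN}_{\mathbf{N},L}}\mathcal{R}\big(\{\varphi(x^j)\}_{j=1}^r,\{f(x^j)\}_{j=1}^r\big)$$ is nonempty, and yet $\Gamma$ applied to $\mathcal{T}$ fails to compute any $\phi$ in this set in the following sense: there is an admissible oracle for $\mathcal{T}$ such that, for every $\phi$ in this set, $$\mathbb{P}\Big(\|\Gamma(\mathcal{T})-\{\phi(x^j)\}_{j=1}^r\|_*\geq 1/4-3\hat\epsilon/4\Big)>\mathrm{p},$$ where $*=1,2$ or $\infty$.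
   Context: A ReLU neural network with dimensions $(\mathbf{N},L)$ is a map $\varphi=W^L\rho W^{L-1}\rho\cdots\rho W^1:\mathbb{R}^d\to\mathbb{R}$ with affine $W^\ell:\mathbb{R}^{N_{\ell-1}}\to\mathbb{R}^{N_\ell}$ and $\rho(t)=\max\{0,t\}$ applied coordinatewise; $\mathcal{NN}_{\mathbf{N},L}$ is the set of these. $\mathcal{CF}_r$ is the set of $\mathcal{R}:\mathbb{R}^r\times\mathbb{R}^r\to\mathbb{R}_+\cup\{\infty\}$ with $\mathcal{R}(v,w)=0$ iff $v=w$, and $\mathcal{CF}^{\epsilon,\hat\epsilon}_r=\{\mathcal{R}\in\mathcal{CF}_r:\mathcal{R}(v,w)\leq\epsilon\Rightarrow\|v-w\|_\infty\leq\hat\epsilon\}$. For $g$ defined on a set $X$, $\operatorname{argmin}_{\epsilon,\,x\in X} g(x)=\{x\in X: g(x)\leq g(y)+\epsilon\ \forall y\in X\}$. For a classification function $f$ and $\delta>0$, $\mathcal{S}^f_\delta$ is the family of finite sets $\{x^1,\dots,x^m\}\subset[0,1]^d$ with $\min_{x^i\neq x^j}\|x^i-x^j\|_\infty\geq2\delta$ and $f(x^j+y)=f(x^j)$ whenever $\|y\|_\infty<\delta$. $\varepsilon'(n)=[(4n+3)(4n+4)]^{-1}$. A randomised algorithm is a randomised Turing or Blum–Shub–Smale machine which accesses the training set $\mathcal{T}=\{x^1,\dots,x^r\}$ only through an oracle: for any $k\in\mathbb{N}$ it may request vectors $x^{1,k},\dots,x^{r,k}$ with $\|x^{i,k}-x^i\|_\infty\leq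 2^{-k}$ (with dyadic entries of precision $2^{-k}$); an oracle is admissible if it satisfies these bounds, and the algorithm must be defined for every admissible oracle. It outputs a vector $\Gamma(\mathcal{T})\in\mathbb{R}^r$; probabilities are over the algorithm's internal randomness. *)

theory Defs
  imports "HOL-Probability.Probability"
begin

text \<open>Points of R^k are represented as real lists of length k.\<close>

definition cube :: "nat \<Rightarrow> real list set" where
  "cube d = {x. length x = d \<and> (\<forall>t\<in>set x. 0 \<le> t \<and> t \<le> 1)}"

definition vsub :: "real list \<Rightarrow> real list \<Rightarrow> real list" where
  "vsub v w = map2 (-) v w"

definition linf :: "real list \<Rightarrow> real" where
  "linf v = Max (insert 0 (abs ` set v))"

definition lone :: "real list \<Rightarrow> real" where
  "lone v = sum_list (map abs v)"

definition ltwo :: "real list \<Rightarrow> real" where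
  "ltwo v = sqrt (sum_list (map (\<lambda>t. t^2) v))"

definition classification_fn :: "nat \<Rightarrow> (real list \<Rightarrow> real) \<Rightarrow> bool" where
  "classification_fn d f \<longleftrightarrow> (\<forall>x\<in>cube d. f x \<in> {0,1})"

text \<open>Neural networks: affine layers (W,b), W given by its rows.\<close>
definition affine :: "real list list \<times> real list \<Rightarrow> real list \<Rightarrow> real list" where
  "affine l v = map2 (\<lambda>row c. sum_list (map2 (*) row v) + c) (fst l) (snd l)"

definition relu :: "real list \<Rightarrow> real list" where
  "relu v = map (\<lambda>t. max 0 t) v"

fun net_eval :: "(real list list \<times> real list) list \<Rightarrow> real list \<Rightarrow> real list" where
  "net_eval [] v = v"
| "net_eval [l] v = affine l v"
| "net_eval (l # l' # ls) v = net_eval (l' # ls) (relu (affine l v))"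

definition layers_ok :: "nat list \<Rightarrow> (real list list \<times> real list) list \<Rightarrow> bool" where
  "layers_ok ds ps \<longleftrightarrow> length ps + 1 = length ds \<and>
     (\<forall>i < length ps. length (fst (ps!i)) = ds!(i+1) \<and> length (snd (ps!i)) = ds!(i+1)
        \<and> (\<forall>row\<in>set (fst (ps!i)). length row = ds!i))"

text \<open>NN_{N,L} with N = (1, N_{L-1}, ..., N_1, d); Ns = [N_1,...,N_{L-1}], L = length Ns + 1.\<close>
definition NN :: "nat \<Rightarrow> nat list \<Rightarrow> (real list \<Rightarrow> real) set" where
  "NN d Ns = {\<phi>. \<exists>ps. layers_ok (d # Ns @ [1]) ps \<and> \<phi> = (\<lambda>x. hd (net_eval ps x))}"

definition CF :: "nat \<Rightarrow> (real list \<Rightarrow> real list \<Rightarrow> ennreal) set" where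
  "CF r = {R. \<forall>v w. length v = r \<longrightarrow> length w = r \<longrightarrow> (R v w = 0 \<longleftrightarrow> v = w)}"

definition CF_eps :: "nat \<Rightarrow> real \<Rightarrow> real \<Rightarrow> (real list \<Rightarrow> real list \<Rightarrow> ennreal) set" where
  "CF_eps r \<epsilon> \<epsilon>h = {R \<in> CF r. \<forall>v w. length v = r \<longrightarrow> length w = r \<longrightarrow>
      R v w \<le> ennreal \<epsilon> \<longrightarrow> linf (vsub v w) \<le> \<epsilon>h}"

definition argmin_eps :: "real \<Rightarrow> 'a set \<Rightarrow> ('a \<Rightarrow> ennreal) \<Rightarrow> 'a set" where
  "argmin_eps \<epsilon> X g = {x\<in>X. \<forall>y\<in>X. g x \<le> g y + ennreal \<epsilon>}"

text \<open>S^f_delta, training sets as duplicate-free lists (ordering x^1,...,x^m).\<close>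
definition S :: "(real list \<Rightarrow> real) \<Rightarrow> nat \<Rightarrow> real \<Rightarrow> real list list set" where
  "S f d \<delta> = {xs. distinct xs \<and> set xs \<subseteq> cube d
      \<and> (\<forall>x\<in>set xs. \<forall>y\<in>set xs. x \<noteq> y \<longrightarrow> linf (vsub x y) \<ge> 2 * \<delta>)
      \<and> (\<forall>x\<in>set xs. \<forall>z\<in>cube d. linf (vsub z x) < \<delta> \<longrightarrow> f z = f x)}"

definition eps' :: "nat \<Rightarrow> real" where
  "eps' n = 1 / ((4 * real n + 3) * (4 * real n + 4))"

text \<open>Oracle: Or k i = x^{i,k}, a dyadic approximation of precision 2^-k.\<close>
definition admissible_oracle :: "nat \<Rightarrow> real list list \<Rightarrow> (nat \<Rightarrow> nat \<Rightarrow> real list) \<Rightarrow> bool" where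
  "admissible_oracle d T Or \<longleftrightarrow>
     (\<forall>k i. i < length T \<longrightarrow> length (Or k i) = d \<and>
        (\<forall>l < d. \<bar>Or k i ! l - T ! i ! l\<bar> \<le> (1/2)^k \<and> (\<exists>m::int. Or k i ! l = of_int m / 2^k)))
   \<and> (\<forall>k i. length T \<le> i \<longrightarrow> Or k i = [])"

text \<open>Randomised (general) algorithm on training sets of r points in [0,1]^d:
  random seed (coin sequence) omega drawn from a probability measure M; for each seed the
  output depends only on finitely many oracle answers; outputs are measurable in omega.\<close>
definition randomised_algorithm ::
  "(nat \<Rightarrow> bool) measure \<Rightarrow> nat \<Rightarrow> nat \<Rightarrow> ((nat \<Rightarrow> bool) \<Rightarrow> (nat \<Rightarrow> nat \<Rightarrow> real list) \<Rightarrow> real list) \<Rightarrow> bool" where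
  "randomised_algorithm M d r \<Gamma> \<longleftrightarrow> prob_space M \<and>
    (\<forall>T Or. length T = r \<and> set T \<subseteq> cube d \<and> admissible_oracle d T Or \<longrightarrow>
       (\<forall>\<omega>\<in>space M. length (\<Gamma> \<omega> Or) = r) \<and>
       (\<forall>i<r. (\<lambda>\<omega>. \<Gamma> \<omega> Or ! i) \<in> borel_measurable M) \<and>
       (\<forall>\<omega>\<in>space M. \<exists>\<Lambda>::(nat \<times> nat) set. finite \<Lambda> \<and>
          (\<forall>T' Or'. length T' = r \<and> set T' \<subseteq> cube d \<and> admissible_oracle d T' Or'
             \<and> (\<forall>(k,i)\<in>\<Lambda>. Or' k i = Or k i) \<longrightarrow> \<Gamma> \<omega> Or' = \<Gamma> \<omega> Or)))"

end

theory Submission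
  imports Defs
begin

definition PL :: "real set \<Rightarrow> (real \<Rightarrow> real) \<Rightarrow> bool" where
  "PL B g \<longleftrightarrow> (\<forall>a b. a \<le> b \<longrightarrow> (\<forall>x\<in>B. x \<le> a \<or> b \<le> x) \<longrightarrow>
      (\<exists>\<alpha> \<beta>. \<forall>t\<in>{a..b}. g t = \<alpha> * t + \<beta>))"

lemma PL_mono: "PL B g \<Longrightarrow> B \<subseteq> C \<Longrightarrow> PL C g"
  unfolding PL_def by (meson subsetD)

lemma PL_const: "PL B (\<lambda>t. c)"
  unfolding PL_def by (rule allI impI)+ (rule exI[of _ 0], rule exI[of _ c], simp)

lemma PL_id: "PL B (\<lambda>t. t)"
  unfolding PL_def by (rule allI impI)+ (rule exI[of _ 1], rule exI[of _ 0], simp)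

lemma PL_add: "PL B g \<Longrightarrow> PL B h \<Longrightarrow> PL B (\<lambda>t. g t + h t)"
  unfolding PL_def
proof (intro allI impI)
  fix a b :: real
  assume g: "\<forall>a b. a \<le> b \<longrightarrow> (\<forall>x\<in>B. x \<le> a \<or> b \<le> x) \<longrightarrow> (\<exists>\<alpha> \<beta>. \<forall>t\<in>{a..b}. g t = \<alpha> * t + \<beta>)"
    and h: "\<forall>a b. a \<le> b \<longrightarrow> (\<forall>x\<in>B. x \<le> a \<or> b \<le> x) \<longrightarrow> (\<exists>\<alpha> \<beta>. \<forall>t\<in>{a..b}. h t = \<alpha> * t + \<beta>)"
    and ab: "a \<le> b" "\<forall>x\<in>B. x \<le> a \<or> b \<le> x"
  from g ab obtain \<alpha>1 \<beta>1 where 1: "\<forall>t\<in>{a..b}. g t = \<alpha>1 * t + \<beta>1" by blast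
  from h ab obtain \<alpha>2 \<beta>2 where 2: "\<forall>t\<in>{a..b}. h t = \<alpha>2 * t + \<beta>2" by blast
  show "\<exists>\<alpha> \<beta>. \<forall>t\<in>{a..b}. g t + h t = \<alpha> * t + \<beta>"
    by (rule exI[of _ "\<alpha>1+\<alpha>2"], rule exI[of _ "\<beta>1+\<beta>2"]) (simp add: 1 2 algebra_simps)
qed

lemma PL_cmult: "PL B g \<Longrightarrow> PL B (\<lambda>t. c * g t)"
  unfolding PL_def
proof (intro allI impI)
  fix a b :: real
  assume g: "\<forall>a b. a \<le> b \<longrightarrow> (\<forall>x\<in>B. x \<le> a \<or> b \<le> x) \<longrightarrow> (\<exists>\<alpha> \<beta>. \<forall>t\<in>{a..b}. g t = \<alpha> * t + \<beta>)"
    and ab: "a \<le> b" "\<forall>x\<in>B. x \<le> a \<or> b \<le> x"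
  from g ab obtain \<alpha>1 \<beta>1 where 1: "\<forall>t\<in>{a..b}. g t = \<alpha>1 * t + \<beta>1" by blast
  show "\<exists>\<alpha> \<beta>. \<forall>t\<in>{a..b}. c * g t = \<alpha> * t + \<beta>"
    by (rule exI[of _ "c*\<alpha>1"], rule exI[of _ "c*\<beta>1"]) (simp add: 1 algebra_simps)
qed

lemma PL_sum: "finite I \<Longrightarrow> (\<And>i. i \<in> I \<Longrightarrow> PL B (g i)) \<Longrightarrow> PL B (\<lambda>t. \<Sum>i\<in>I. g i t)"
  by (induction I rule: finite_induct) (auto intro: PL_add PL_const)

definition zset :: "real set \<Rightarrow> (real \<Rightarrow> real) \<Rightarrow> real set" where
  "zset B h = {t. t \<notin> B \<and> h t = 0 \<and> \<not> (\<exists>e>0. \<forall>s. \<bar>s - t\<bar> < e \<longrightarrow> h s = 0)}"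

lemma PL_relu: "PL B h \<Longrightarrow> PL (B \<union> zset B h) (\<lambda>t. max 0 (h t))"
  unfolding PL_def
proof (intro allI impI)
  fix a b :: real
  assume h: "\<forall>a b. a \<le> b \<longrightarrow> (\<forall>x\<in>B. x \<le> a \<or> b \<le> x) \<longrightarrow> (\<exists>\<alpha> \<beta>. \<forall>t\<in>{a..b}. h t = \<alpha> * t + \<beta>)"
    and ab: "a \<le> b" "\<forall>x\<in>B \<union> zset B h. x \<le> a \<or> b \<le> x"
  from h ab obtain \<alpha> \<beta> where 1: "\<forall>t\<in>{a..b}. h t = \<alpha> * t + \<beta>" by blast
  have ha: "h a = \<alpha>*a+\<beta>" and hb: "h b = \<alpha>*b+\<beta>" using 1 ab by auto
  consider "h a \<ge> 0 \<and> h b \<ge> 0" | "h a \<le> 0 \<and> h b \<le> 0" | "h a < 0 \<and> h b > 0" | "h a > 0 \<and> h b < 0"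
    by linarith
  then show "\<exists>\<alpha> \<beta>. \<forall>t\<in>{a..b}. max 0 (h t) = \<alpha> * t + \<beta>"
  proof cases
    case 1
    have "\<forall>t\<in>{a..b}. h t \<ge> 0"
    proof
      fix t assume t: "t \<in> {a..b}"
      have "h t = \<alpha>*t+\<beta>" using \<open>\<forall>t\<in>{a..b}. h t = \<alpha> * t + \<beta>\<close> t by auto
      moreover have "\<alpha>*t+\<beta> \<ge> 0"
      proof (cases "\<alpha> \<ge> 0")
        case True
        then have "\<alpha>*a \<le> \<alpha>*t" using t by (auto intro: mult_left_mono)
        then show ?thesis using 1 ha by linarith
      next
        case False
        then have "\<alpha>*b \<le> \<alpha>*t" using t by (auto intro: mult_left_mono_neg)
        then show ?thesis using 1 hb by linarith
      qed
      ultimately show "h t \<ge> 0" by simp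
    qed
    then show ?thesis using \<open>\<forall>t\<in>{a..b}. h t = \<alpha> * t + \<beta>\<close>
      by (intro exI[of _ \<alpha>] exI[of _ \<beta>]) auto
  next
    case 2
    have "\<forall>t\<in>{a..b}. h t \<le> 0"
    proof
      fix t assume t: "t \<in> {a..b}"
      have "h t = \<alpha>*t+\<beta>" using \<open>\<forall>t\<in>{a..b}. h t = \<alpha> * t + \<beta>\<close> t by auto
      moreover have "\<alpha>*t+\<beta> \<le> 0"
      proof (cases "\<alpha> \<ge> 0")
        case True
        then have "\<alpha>*t \<le> \<alpha>*b" using t by (auto intro: mult_left_mono)
        then show ?thesis using 2 hb by linarith
      next
        case False
        then have "\<alpha>*t \<le> \<alpha>*a" using t by (auto intro: mult_left_mono_neg)
        then show ?thesis using 2 ha by linarith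
      qed
      ultimately show "h t \<le> 0" by simp
    qed
    then show ?thesis by (intro exI[of _ 0] exI[of _ 0]) auto
  next
    case 3
    then have al: "\<alpha> \<noteq> 0" using ha hb by auto
    define z where "z = -\<beta>/\<alpha>"
    have hz: "\<alpha>*z+\<beta> = 0" using al by (simp add: z_def)
    have "a < z" "z < b"
    proof -
      have "\<alpha> > 0" proof (rule ccontr)
        assume "\<not> \<alpha> > 0" then have "\<alpha> < 0" using al by simp
        then have "\<alpha>*b \<le> \<alpha>*a" using ab by (simp add: mult_left_mono_neg)
        then show False using 3 ha hb by linarith
      qed
      then show "a < z" "z < b" using 3 ha hb hz
        by (smt (verit, best) mult_less_cancel_left)+
    qed
    have "z \<in> zset B h"
      unfolding zset_def
    proof (intro CollectI conjI)
      show "z \<notin> B"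
      proof
        assume "z \<in> B" then have "z \<le> a \<or> b \<le> z" using ab(2) by blast
        then show False using \<open>a<z\<close> \<open>z<b\<close> by linarith
      qed
      show "h z = 0" using 1 \<open>a<z\<close> \<open>z<b\<close> hz by auto
      show "\<not> (\<exists>e>0. \<forall>s. \<bar>s - z\<bar> < e \<longrightarrow> h s = 0)"
      proof
      assume "\<exists>e>0. \<forall>s. \<bar>s - z\<bar> < e \<longrightarrow> h s = 0"
      then obtain e where e: "e > 0" "\<forall>s. \<bar>s - z\<bar> < e \<longrightarrow> h s = 0" by blast
      obtain m where m1: "m > 0" "m \<le> e" "m \<le> b - z" using e \<open>z<b\<close>
        by (metis min.cobounded1 min.cobounded2 min_less_iff_conj diff_gt_0_iff_gt)
      define s where "s = z + m / 2"
      have "\<bar>s - z\<bar> < e" "a \<le> s" "s \<le> b" "s \<noteq> z" using m1 \<open>a<z\<close> unfolding s_def by auto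
      then have "h s = 0" "h s = \<alpha> * s + \<beta>" using e 1 by auto
      then have "\<alpha> * s = \<alpha> * z" using hz by linarith
      then show False using al \<open>s\<noteq>z\<close> by simp
      qed
    qed
    then show ?thesis using ab \<open>a<z\<close> \<open>z<b\<close> by force
  next
    case 4
    then have al: "\<alpha> \<noteq> 0" using ha hb by auto
    define z where "z = -\<beta>/\<alpha>"
    have hz: "\<alpha>*z+\<beta> = 0" using al by (simp add: z_def)
    have "a < z" "z < b"
    proof -
      have "\<alpha> < 0" proof (rule ccontr)
        assume "\<not> \<alpha> < 0" then have "\<alpha> > 0" using al by simp
        then have "\<alpha>*a \<le> \<alpha>*b" using ab by (simp add: mult_left_mono)
        then show False using 4 ha hb by linarith
      qed
      then show "a < z" "z < b" using 4 ha hb hz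
        by (smt (verit, best) mult_less_cancel_left)+
    qed
    have "z \<in> zset B h"
      unfolding zset_def
    proof (intro CollectI conjI)
      show "z \<notin> B"
      proof
        assume "z \<in> B" then have "z \<le> a \<or> b \<le> z" using ab(2) by blast
        then show False using \<open>a<z\<close> \<open>z<b\<close> by linarith
      qed
      show "h z = 0" using 1 \<open>a<z\<close> \<open>z<b\<close> hz by auto
      show "\<not> (\<exists>e>0. \<forall>s. \<bar>s - z\<bar> < e \<longrightarrow> h s = 0)"
      proof
      assume "\<exists>e>0. \<forall>s. \<bar>s - z\<bar> < e \<longrightarrow> h s = 0"
      then obtain e where e: "e > 0" "\<forall>s. \<bar>s - z\<bar> < e \<longrightarrow> h s = 0" by blast
      obtain m where m1: "m > 0" "m \<le> e" "m \<le> b - z" using e \<open>z<b\<close>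
        by (metis min.cobounded1 min.cobounded2 min_less_iff_conj diff_gt_0_iff_gt)
      define s where "s = z + m / 2"
      have "\<bar>s - z\<bar> < e" "a \<le> s" "s \<le> b" "s \<noteq> z" using m1 \<open>a<z\<close> unfolding s_def by auto
      then have "h s = 0" "h s = \<alpha> * s + \<beta>" using e 1 by auto
      then have "\<alpha> * s = \<alpha> * z" using hz by linarith
      then show False using al \<open>s\<noteq>z\<close> by simp
      qed
    qed
    then show ?thesis using ab \<open>a<z\<close> \<open>z<b\<close> by force
  qed
qed


lemma zset_inj:
  assumes fin: "finite B" and pl: "PL B h"
  shows "inj_on (\<lambda>t. card {b\<in>B. b < t}) (zset B h)"
proof -
  have key: False if t: "t \<in> zset B h" and t': "t' \<in> zset B h" and lt: "t < t'"
     and eq: "card {b\<in>B. b < t} = card {b\<in>B. b < t'}" for t t'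
  proof -
    have tB: "t \<notin> B" "h t = 0" "\<not> (\<exists>e>0. \<forall>s. \<bar>s - t\<bar> < e \<longrightarrow> h s = 0)"
      using t by (auto simp: zset_def)
    have t'B: "t' \<notin> B" "h t' = 0" using t' by (auto simp: zset_def)
    have noB: "\<forall>b\<in>B. b < t \<or> t' < b"
    proof (rule ccontr)
      assume "\<not> (\<forall>b\<in>B. b < t \<or> t' < b)"
      then obtain b where b: "b \<in> B" "t \<le> b" "b \<le> t'" by force
      then have "t < b" "b < t'" using tB t'B by (auto simp: order.order_iff_strict)
      have sub: "{b\<in>B. b < t} \<subseteq> {b\<in>B. b < t'}" using lt by auto
      have "b \<in> {b\<in>B. b < t'}" "b \<notin> {b\<in>B. b < t}" using b \<open>b < t'\<close> \<open>t<b\<close> by auto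
      then have "{b\<in>B. b < t} \<subset> {b\<in>B. b < t'}" using sub by blast
      then have "card {b\<in>B. b < t} < card {b\<in>B. b < t'}" using fin by (intro psubset_card_mono) auto
      then show False using eq by simp
    qed
    define L where "L = {b\<in>B. b < t}"
    have finL: "finite L" using fin by (simp add: L_def)
    obtain e where e: "e > 0" "\<forall>b\<in>L. b \<le> t - e"
    proof (cases "L = {}")
      case True then show ?thesis using that[of 1] by auto
    next
      case False
      have "Max L < t" using False finL by (auto simp: L_def)
      then show ?thesis using that[of "t - Max L"] finL by auto
    qed
    have "\<forall>x\<in>B. x \<le> t - e \<or> t' \<le> x" using noB e by (auto simp: L_def)
    moreover have "t - e \<le> t'" using e lt by auto
    ultimately obtain \<alpha> \<beta> where ab: "\<forall>s\<in>{t-e..t'}. h s = \<alpha> * s + \<beta>"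
      using pl unfolding PL_def by blast
    have "\<alpha> * t + \<beta> = 0" "\<alpha> * t' + \<beta> = 0" using ab tB t'B e lt by auto
    then have "\<alpha> * t' - \<alpha> * t = 0" by linarith
    then have "\<alpha> * (t' - t) = 0" by (simp only: right_diff_distrib)
    then have a0: "\<alpha> = 0" "\<beta> = 0" using lt \<open>\<alpha> * t + \<beta> = 0\<close> by auto
    have "\<exists>e>0. \<forall>s. \<bar>s - t\<bar> < e \<longrightarrow> h s = 0"
    proof (intro exI[of _ "min e (t' - t)"] conjI allI impI)
      show "min e (t' - t) > 0" using e lt by simp
      fix s assume "\<bar>s - t\<bar> < min e (t' - t)"
      then have "s \<in> {t-e..t'}" by auto
      then show "h s = 0" using ab a0 by auto
    qed
    then show False using tB by blast
  qed
  show ?thesis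
    unfolding inj_on_def
  proof (intro ballI impI)
    fix x y assume xy: "x \<in> zset B h" "y \<in> zset B h" "card {b \<in> B. b < x} = card {b \<in> B. b < y}"
    show "x = y"
    proof (cases x y rule: linorder_cases)
      case less then show ?thesis using key[of x y] xy by blast
    next
      case greater then show ?thesis using key[of y x] xy by simp
    qed
  qed
qed

lemma zset_card:
  assumes fin: "finite B" and pl: "PL B h"
  shows "finite (zset B h) \<and> card (zset B h) \<le> card B + 1"
proof -
  let ?f = "\<lambda>t. card {b\<in>B. b < t}"
  have inj: "inj_on ?f (zset B h)" by (rule zset_inj[OF fin pl])
  have img: "?f ` zset B h \<subseteq> {0..card B}"
    using fin by (auto intro!: card_mono)
  have "finite (zset B h)" using inj img by (meson finite_atLeastAtMost inj_on_finite)
  moreover have "card (zset B h) \<le> card {0..card B}"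
    using inj img by (intro card_inj_on_le) auto
  ultimately show ?thesis by simp
qed


definition PLv :: "real set \<Rightarrow> (real \<Rightarrow> real list) \<Rightarrow> nat \<Rightarrow> bool" where
  "PLv B V n \<longleftrightarrow> (\<forall>t. length (V t) = n) \<and> (\<forall>j<n. PL B (\<lambda>t. V t ! j))"

lemma layers_ok_Cons:
  "layers_ok (a # b # ds) (p # ps) \<longleftrightarrow>
     length (fst p) = b \<and> length (snd p) = b \<and> (\<forall>row\<in>set (fst p). length row = a) \<and> layers_ok (b # ds) ps"
proof
  assume H: "layers_ok (a # b # ds) (p # ps)"
  then have H1: "length (p # ps) + 1 = length (a # b # ds)"
    and H2: "\<And>i. i < length (p # ps) \<Longrightarrow> length (fst ((p#ps)!i)) = (a#b#ds)!(i+1) \<and>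
          length (snd ((p#ps)!i)) = (a#b#ds)!(i+1) \<and> (\<forall>row\<in>set (fst ((p#ps)!i)). length row = (a#b#ds)!i)"
    unfolding layers_ok_def by blast+
  have "length (fst p) = b \<and> length (snd p) = b \<and> (\<forall>row\<in>set (fst p). length row = a)"
    using H2[of 0] by simp
  moreover have "layers_ok (b # ds) ps"
    unfolding layers_ok_def
  proof (intro conjI allI impI)
    show "length ps + 1 = length (b # ds)" using H1 by simp
    fix i assume "i < length ps"
    then show "length (fst (ps ! i)) = (b # ds) ! (i + 1)" "length (snd (ps ! i)) = (b # ds) ! (i + 1)"
       "\<forall>row\<in>set (fst (ps ! i)). length row = (b # ds) ! i"
      using H2[of "Suc i"] by simp_all
  qed
  ultimately show "length (fst p) = b \<and> length (snd p) = b \<and> (\<forall>row\<in>set (fst p). length row = a) \<and> layers_ok (b # ds) ps"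
    by blast
next
  assume H: "length (fst p) = b \<and> length (snd p) = b \<and> (\<forall>row\<in>set (fst p). length row = a) \<and> layers_ok (b # ds) ps"
  then have H1: "length ps + 1 = length (b # ds)"
    and H2: "\<And>i. i < length ps \<Longrightarrow> length (fst (ps!i)) = (b#ds)!(i+1) \<and>
          length (snd (ps!i)) = (b#ds)!(i+1) \<and> (\<forall>row\<in>set (fst (ps!i)). length row = (b#ds)!i)"
    unfolding layers_ok_def by blast+
  show "layers_ok (a # b # ds) (p # ps)"
    unfolding layers_ok_def
  proof (intro conjI allI impI)
    show "length (p # ps) + 1 = length (a # b # ds)" using H1 by simp
    fix i assume i: "i < length (p # ps)"
    show "length (fst ((p # ps) ! i)) = (a # b # ds) ! (i + 1)"
      using H H2[of "i - 1"] i by (cases i) auto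
    show "length (snd ((p # ps) ! i)) = (a # b # ds) ! (i + 1)"
      using H H2[of "i - 1"] i by (cases i) auto
    show "\<forall>row\<in>set (fst ((p # ps) ! i)). length row = (a # b # ds) ! i"
      using H H2[of "i - 1"] i by (cases i) auto
  qed
qed

lemma layers_ok_single: "layers_ok [a, b] [p] \<longleftrightarrow>
     length (fst p) = b \<and> length (snd p) = b \<and> (\<forall>row\<in>set (fst p). length row = a)"
  unfolding layers_ok_def by auto

lemma sum_map2_mult: "length rw = length v \<Longrightarrow>
   sum_list (map2 (*) rw v) = (\<Sum>i<length v. rw ! i * v ! i)"
  by (simp add: sum_list_sum_nth atLeast0LessThan)

lemma PLv_affine:
  assumes "PLv B V n" "length (fst l) = m" "length (snd l) = m" "\<forall>row\<in>set (fst l). length row = n"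
  shows "PLv B (\<lambda>t. affine l (V t)) m"
  unfolding PLv_def
proof (intro conjI allI impI)
  fix t show "length (affine l (V t)) = m" using assms by (simp add: affine_def)
next
  fix j assume j: "j < m"
  have rl: "length (fst l ! j) = n" using assms j by auto
  have "(\<lambda>t. affine l (V t) ! j) = (\<lambda>t. (\<Sum>i<n. (fst l ! j) ! i * V t ! i) + snd l ! j)"
  proof
    fix t
    have lv: "length (V t) = n" using assms(1) by (simp add: PLv_def)
    show "affine l (V t) ! j = (\<Sum>i<n. (fst l ! j) ! i * V t ! i) + snd l ! j"
      using j assms(2,3) rl lv by (simp add: affine_def sum_map2_mult)
  qed
  moreover have "PL B (\<lambda>t. (\<Sum>i<n. (fst l ! j) ! i * V t ! i) + snd l ! j)"
    using assms(1) by (intro PL_add PL_sum PL_cmult PL_const) (auto simp: PLv_def)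
  ultimately show "PL B (\<lambda>t. affine l (V t) ! j)" by simp
qed

lemma PLv_relu:
  assumes pv: "PLv B V m" and fin: "finite B"
  shows "\<exists>B'. finite B' \<and> card B' + 1 \<le> (card B + 1) * (m + 1) \<and> PLv B' (\<lambda>t. relu (V t)) m"
proof -
  define Z where "Z = (\<Union>j<m. zset B (\<lambda>t. V t ! j))"
  have zc: "finite (zset B (\<lambda>t. V t ! j)) \<and> card (zset B (\<lambda>t. V t ! j)) \<le> card B + 1" if "j < m" for j
    using zset_card[OF fin] pv that by (auto simp: PLv_def)
  have finZ: "finite Z" using zc by (auto simp: Z_def)
  have "card Z \<le> (\<Sum>j<m. card (zset B (\<lambda>t. V t ! j)))" unfolding Z_def by (rule card_UN_le) simp
  also have "\<dots> \<le> (\<Sum>j<m. card B + 1)" using zc by (intro sum_mono) auto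
  finally have cZ: "card Z \<le> m * (card B + 1)" by simp
  have "card (B \<union> Z) \<le> card B + card Z" by (rule card_Un_le)
  then have c: "card (B \<union> Z) + 1 \<le> (card B + 1) * (m + 1)" using cZ by (simp add: algebra_simps)
  have "PLv (B \<union> Z) (\<lambda>t. relu (V t)) m"
    unfolding PLv_def
  proof (intro conjI allI impI)
    fix t show "length (relu (V t)) = m" using pv by (simp add: PLv_def relu_def)
  next
    fix j assume j: "j < m"
    have "PL (B \<union> zset B (\<lambda>t. V t ! j)) (\<lambda>t. max 0 (V t ! j))"
      using pv j by (intro PL_relu) (auto simp: PLv_def)
    then have "PL (B \<union> Z) (\<lambda>t. max 0 (V t ! j))"
      by (rule PL_mono) (use j in \<open>auto simp: Z_def\<close>)
    moreover have "(\<lambda>t. relu (V t) ! j) = (\<lambda>t. max 0 (V t ! j))"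
      using pv j by (auto simp: PLv_def relu_def)
    ultimately show "PL (B \<union> Z) (\<lambda>t. relu (V t) ! j)" by simp
  qed
  then show ?thesis using c finZ fin by blast
qed

lemma PLv_net:
  "layers_ok (n0 # Ns @ [1]) ps \<Longrightarrow> PLv B V n0 \<Longrightarrow> finite B \<Longrightarrow>
     \<exists>B'. finite B' \<and> card B' + 1 \<le> (card B + 1) * prod_list (map Suc Ns) \<and>
          PLv B' (\<lambda>t. net_eval ps (V t)) 1"
proof (induction ps arbitrary: n0 Ns B V rule: induct_list012)
  case 1
  then show ?case by (simp add: layers_ok_def)
next
  case (2 l)
  then have Ns: "Ns = []" by (simp add: layers_ok_def)
  then have "layers_ok [n0, 1] [l]" using 2 by simp
  then have "PLv B (\<lambda>t. affine l (V t)) 1"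
    using 2 by (intro PLv_affine) (auto simp: layers_ok_single)
  then show ?case using 2 Ns by auto
next
  case (3 l l' ls)
  obtain N1 Ns' where Ns: "Ns = N1 # Ns'"
    using 3(3) by (cases Ns) (auto simp: layers_ok_def)
  have lo: "layers_ok (n0 # N1 # Ns' @ [1]) (l # l' # ls)" using 3(3) Ns by simp
  then have l1: "length (fst l) = N1" "length (snd l) = N1" "\<forall>row\<in>set (fst l). length row = n0"
     and lo': "layers_ok (N1 # Ns' @ [1]) (l' # ls)"
    by (simp_all add: layers_ok_Cons)
  have "PLv B (\<lambda>t. affine l (V t)) N1" using 3(4) l1 by (rule PLv_affine)
  then obtain B1 where B1: "finite B1" "card B1 + 1 \<le> (card B + 1) * (N1 + 1)"
      "PLv B1 (\<lambda>t. relu (affine l (V t))) N1"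
    using PLv_relu 3(5) by blast
  obtain B' where B': "finite B'" "card B' + 1 \<le> (card B1 + 1) * prod_list (map Suc Ns')"
      "PLv B' (\<lambda>t. net_eval (l' # ls) (relu (affine l (V t)))) 1"
    using 3(2)[OF lo' B1(3) B1(1)] by blast
  have "card B' + 1 \<le> (card B + 1) * (N1 + 1) * prod_list (map Suc Ns')"
    using B'(2) B1(2) by (meson le_trans mult_le_mono1)
  then have "card B' + 1 \<le> (card B + 1) * prod_list (map Suc Ns)"
    by (simp add: Ns algebra_simps)
  then show ?case using B' by auto
qed


definition cc :: "nat \<Rightarrow> real" where "cc m = (1 / real m + 1 / real (m + 1)) / 2"

definition zr :: "nat \<Rightarrow> real list" where "zr n = replicate n 0"

definition pt :: "nat \<Rightarrow> nat \<Rightarrow> real \<Rightarrow> real \<Rightarrow> nat \<Rightarrow> real list" where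
  "pt r d y0 y1 i = [cc (r + i), if even (r + i) then y1 else y0] @ zr (d - 2)"

definition TT :: "nat \<Rightarrow> nat \<Rightarrow> real \<Rightarrow> real \<Rightarrow> real list list" where
  "TT r d y0 y1 = map (pt r d y0 y1) [0..<r]"

lemma cc_decr: "1 \<le> m \<Longrightarrow> m < m' \<Longrightarrow> cc m' < cc m"
proof -
  assume "1 \<le> m" "m < m'"
  then have "1 / real m' < 1 / real m" "1 / real (m' + 1) < 1 / real (m + 1)"
    by (auto intro!: divide_strict_left_mono)
  then show ?thesis by (simp add: cc_def)
qed

lemma cc_bounds: "1 \<le> m \<Longrightarrow> 1 / real (m+1) < cc m \<and> cc m < 1 / real m"
proof -
  assume m: "1 \<le> m"
  have "1 / real (m+1) < 1 / real m" using m by (auto intro!: divide_strict_left_mono)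
  then show ?thesis by (simp add: cc_def)
qed

lemma PLv_line: "d \<ge> 2 \<Longrightarrow> PLv {} (\<lambda>t. [t, y] @ zr (d - 2)) d"
  unfolding PLv_def
proof (intro conjI allI impI)
  fix t assume "d \<ge> 2" then show "length ([t, y] @ zr (d - 2)) = d" by (simp add: zr_def)
next
  fix j assume "j < d"
  show "PL {} (\<lambda>t. ([t, y] @ zr (d - 2)) ! j)"
  proof (cases j)
    case 0 then show ?thesis by (simp add: PL_id)
  next
    case (Suc j')
    then have "(\<lambda>t. ([t, y] @ zr (d - 2)) ! j) = (\<lambda>t. ([y] @ zr (d - 2)) ! j')" by simp
    then show ?thesis by (simp add: PL_const)
  qed
qed

lemma triple:
  fixes g :: "real \<Rightarrow> real" and L :: real
  assumes aff: "\<forall>t\<in>{u2..u0}. g t = \<alpha> * t + \<beta>" and u: "u2 < u1" "u1 < u0"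
    and L: "L = 0 \<or> L = 1"
  shows "\<bar>g u0 - L\<bar> \<ge> 1/2 \<or> \<bar>g u1 - (1 - L)\<bar> \<ge> 1/2 \<or> \<bar>g u2 - L\<bar> \<ge> 1/2"
proof (rule ccontr)
  assume "\<not> ?thesis"
  then have A: "\<bar>g u0 - L\<bar> < 1/2" "\<bar>g u1 - (1 - L)\<bar> < 1/2" "\<bar>g u2 - L\<bar> < 1/2" by auto
  have g: "g u0 = \<alpha> * u0 + \<beta>" "g u1 = \<alpha> * u1 + \<beta>" "g u2 = \<alpha> * u2 + \<beta>" using aff u by auto
  have "min (g u0) (g u2) \<le> g u1 \<and> g u1 \<le> max (g u0) (g u2)"
  proof (cases "\<alpha> \<ge> 0")
    case True
    then have "\<alpha> * u2 \<le> \<alpha> * u1" "\<alpha> * u1 \<le> \<alpha> * u0" using u by (auto intro: mult_left_mono)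
    then show ?thesis using g by auto
  next
    case False
    then have "\<alpha> * u1 \<le> \<alpha> * u2" "\<alpha> * u0 \<le> \<alpha> * u1" using u by (auto intro: mult_left_mono_neg)
    then show ?thesis using g by auto
  qed
  then show False using A L by (auto simp: min_def max_def abs_if split: if_splits)
qed

lemma nointerp:
  assumes d: "d \<ge> 2" and lo: "layers_ok (d # Ns @ [1]) ps"
    and r: "r \<ge> 3 * prod_list (map Suc Ns)"
  shows "\<exists>j<r. \<bar>hd (net_eval ps (TT r d y y ! j)) - (if even (r + j) then 1 else 0)\<bar> \<ge> 1/2"
proof -
  define P where "P = prod_list (map Suc Ns)"
  have P1: "P \<ge> 1" unfolding P_def by (induction Ns) auto
  obtain B' where B': "finite B'" "card B' + 1 \<le> (card ({}::real set) + 1) * P"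
      "PLv B' (\<lambda>t. net_eval ps ([t, y] @ zr (d - 2))) 1"
    using PLv_net[OF lo PLv_line[OF d]] unfolding P_def by blast
  define g where "g t = net_eval ps ([t, y] @ zr (d - 2)) ! 0" for t
  have plg: "PL B' g" using B'(3) unfolding g_def PLv_def by simp
  have hdg: "hd (net_eval ps ([t, y] @ zr (d - 2))) = g t" for t
  proof -
    have "length (net_eval ps ([t, y] @ zr (d - 2))) = 1" using B'(3) by (simp add: PLv_def)
    then show ?thesis unfolding g_def by (cases "net_eval ps ([t, y] @ zr (d - 2))") auto
  qed
  define K where "K = (r - 1) div 2"
  have KP: "P \<le> K" using r P1 unfolding K_def P_def[symmetric] by linarith
  have cB: "card B' < K" using B'(2) KP by simp
  have r1: "r \<ge> 3" using r P1 unfolding P_def[symmetric] by linarith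
  have "\<exists>k<K. \<forall>b\<in>B'. b \<le> cc (r + 2*k + 2) \<or> cc (r + 2*k) \<le> b"
  proof (rule ccontr)
    assume "\<not> ?thesis"
    then have "\<forall>k<K. \<exists>b\<in>B'. cc (r + 2*k + 2) < b \<and> b < cc (r + 2*k)" by force
    then obtain bf where bf: "\<And>k. k < K \<Longrightarrow> bf k \<in> B' \<and> cc (r + 2*k + 2) < bf k \<and> bf k < cc (r + 2*k)"
      by metis
    have "inj_on bf {..<K}"
    proof (rule inj_onI)
      fix k k' assume kk: "k \<in> {..<K}" "k' \<in> {..<K}" "bf k = bf k'"
      show "k = k'"
      proof (rule ccontr)
        assume "k \<noteq> k'"
        then consider "k < k'" | "k' < k" by linarith
        then show False
        proof cases
          case 1
          have "cc (r + 2*k') \<le> cc (r + 2*k + 2)"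
            using cc_decr[of "r + 2*k + 2" "r + 2*k'"] 1 by (cases "r + 2*k' = r + 2*k+2") auto
          then show False using bf[of k] bf[of k'] kk by auto
        next
          case 2
          have "cc (r + 2*k) \<le> cc (r + 2*k' + 2)"
            using cc_decr[of "r + 2*k' + 2" "r + 2*k"] 2 by (cases "r + 2*k = r + 2*k'+2") auto
          then show False using bf[of k] bf[of k'] kk by auto
        qed
      qed
    qed
    then have "card {..<K} \<le> card B'" using bf B'(1) by (intro card_inj_on_le) auto
    then show False using cB by simp
  qed
  then obtain k where k: "k < K" "\<forall>b\<in>B'. b \<le> cc (r + 2*k + 2) \<or> cc (r + 2*k) \<le> b" by blast
  have ord: "cc (r + 2*k + 2) < cc (r + 2*k + 1)" "cc (r + 2*k + 1) < cc (r + 2*k)"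
    using r1 by (auto intro!: cc_decr)
  obtain \<alpha> \<beta> where ab: "\<forall>t\<in>{cc (r + 2*k + 2)..cc (r + 2*k)}. g t = \<alpha> * t + \<beta>"
    using plg k(2) ord unfolding PL_def by (meson less_trans less_imp_le)
  define L :: real where "L = (if even (r + 2*k) then 1 else 0)"
  have tri: "\<bar>g (cc (r + 2*k)) - L\<bar> \<ge> 1/2 \<or> \<bar>g (cc (r + 2*k + 1)) - (1 - L)\<bar> \<ge> 1/2 \<or>
      \<bar>g (cc (r + 2*k + 2)) - L\<bar> \<ge> 1/2"
    by (rule triple[OF ab ord]) (simp add: L_def)
  have kr: "2*k + 2 < r" using k(1) unfolding K_def by linarith
  have TTj: "TT r d y y ! j = [cc (r + j), y] @ zr (d - 2)" if "j < r" for j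
    using that by (simp add: TT_def pt_def)
  have labs: "(if even (r + (2*k)) then 1 else 0) = L"
       "(if even (r + (2*k+1)) then 1 else 0) = 1 - L"
       "(if even (r + (2*k+2)) then 1 else 0) = L"
    by (auto simp: L_def)
  from tri show ?thesis
  proof (elim disjE)
    assume "\<bar>g (cc (r + 2*k)) - L\<bar> \<ge> 1/2"
    then show ?thesis using kr TTj[of "2*k"] hdg labs
      by (intro exI[of _ "2*k"]) (auto simp: add.assoc)
  next
    assume "\<bar>g (cc (r + 2*k + 1)) - (1 - L)\<bar> \<ge> 1/2"
    then show ?thesis using kr TTj[of "2*k+1"] hdg labs
      by (intro exI[of _ "2*k+1"]) (auto simp: add.assoc)
  next
    assume "\<bar>g (cc (r + 2*k + 2)) - L\<bar> \<ge> 1/2"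
    then show ?thesis using kr TTj[of "2*k+2"] hdg labs
      by (intro exI[of _ "2*k+2"]) (auto simp: add.assoc)
  qed
qed


definition lpass :: "nat \<Rightarrow> nat \<Rightarrow> real list list \<times> real list" where
  "lpass a b = ((1 # zr (a - 1)) # replicate (b - 1) (zr a), zr b)"

definition lfirst :: "nat \<Rightarrow> nat \<Rightarrow> real list \<Rightarrow> real \<Rightarrow> real list list \<times> real list" where
  "lfirst d N w \<beta> = (w # replicate (N - 1) (zr d), \<beta> # zr (N - 1))"

definition netI :: "nat \<Rightarrow> nat list \<Rightarrow> real list \<Rightarrow> real \<Rightarrow> (real list list \<times> real list) list" where
  "netI d Ns w \<beta> = lfirst d (hd Ns) w \<beta> # map2 lpass Ns (tl Ns @ [1])"

lemma sum_zr: "sum_list (map2 (*) (zr n) v) = 0"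
  unfolding zr_def
proof (induction n arbitrary: v)
  case 0 then show ?case by simp
next
  case (Suc n) then show ?case by (cases v) auto
qed

lemma map2_repl: "map2 f (replicate n x) (replicate n y) = replicate n (f x y)"
  by (induction n) auto

lemma affine_zero_rows: "map2 (\<lambda>rw c. sum_list (map2 (*) rw v) + c) (replicate n (zr a)) (zr n) = zr n"
proof -
  have "map2 (\<lambda>rw c. sum_list (map2 (*) rw v) + c) (replicate n (zr a)) (replicate n 0)
     = replicate n (sum_list (map2 (*) (zr a) v) + 0)" by (rule map2_repl)
  then show ?thesis using sum_zr[of a v] by (simp add: zr_def)
qed

lemma affine_pass: "1 \<le> a \<Longrightarrow> 1 \<le> b \<Longrightarrow> affine (lpass a b) (z # zr (a - 1)) = z # zr (b - 1)"
proof -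
  assume a: "1 \<le> a" and b: "1 \<le> b"
  have zb: "zr b = 0 # zr (b - 1)" using b by (cases b) (auto simp: zr_def)
  show ?thesis
    unfolding affine_def lpass_def fst_conv snd_conv zb
    by (simp add: sum_zr affine_zero_rows)
qed

lemma relu_cons: "z \<ge> 0 \<Longrightarrow> relu (z # zr n) = z # zr n"
  by (simp add: relu_def zr_def)

lemma lo_pass: "(\<forall>n\<in>set (a#as). 0 < n) \<Longrightarrow> layers_ok (a # as @ [1]) (map2 lpass (a#as) (as @ [1]))"
proof (induction as arbitrary: a)
  case Nil
  then show ?case by (simp add: layers_ok_single lpass_def zr_def)
next
  case (Cons b bs)
  have "layers_ok (b # bs @ [1]) (map2 lpass (b#bs) (bs @ [1]))" using Cons by simp
  moreover have "map2 lpass (a # b # bs) ((b # bs) @ [1]) = lpass a b # map2 lpass (b#bs) (bs @ [1])" by simp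
  ultimately show ?case using Cons.prems
    by (simp only: append_Cons layers_ok_Cons) (auto simp: lpass_def zr_def)
qed

lemma eval_pass: "(\<forall>n\<in>set (a#as). 0 < n) \<Longrightarrow> z \<ge> 0 \<Longrightarrow>
   hd (net_eval (map2 lpass (a#as) (as @ [1])) (z # zr (a - 1))) = z"
proof (induction as arbitrary: a)
  case Nil
  then show ?case using affine_pass[of a 1 z] by (simp add: zr_def)
next
  case (Cons b bs)
  obtain c cs where cs: "bs @ [1] = c # cs" by (cases "bs @ [1]") auto
  have m2: "map2 lpass (b # bs) (bs @ [1]) = lpass b c # map2 lpass bs cs" by (simp only: cs) simp
  have "net_eval (map2 lpass (a # b # bs) ((b # bs) @ [1])) (z # zr (a - 1))
      = net_eval (lpass a b # lpass b c # map2 lpass bs cs) (z # zr (a - 1))"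
    by (simp only: append_Cons list.map zip_Cons_Cons m2 prod.case)
  also have "\<dots> = net_eval (lpass b c # map2 lpass bs cs) (relu (affine (lpass a b) (z # zr (a - 1))))"
    by simp
  also have "\<dots> = net_eval (lpass b c # map2 lpass bs cs) (z # zr (b - 1))"
    using Cons.prems affine_pass[of a b z] relu_cons by simp
  also have "\<dots> = net_eval (map2 lpass (b # bs) (bs @ [1])) (z # zr (b - 1))"
    by (simp only: m2)
  finally show ?case using Cons by simp
qed

lemma lo_netI:
  assumes "Ns \<noteq> []" "\<forall>n\<in>set Ns. 0 < n" "length w = d"
  shows "layers_ok (d # Ns @ [1]) (netI d Ns w \<beta>)"
proof -
  obtain a as where Ns: "Ns = a # as" using assms(1) by (cases Ns) auto
  have a: "a \<ge> 1" using assms Ns by auto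
  have "layers_ok (a # as @ [1]) (map2 lpass (a#as) (as @ [1]))" using assms Ns by (intro lo_pass) auto
  then have "layers_ok (d # a # (as @ [1])) (lfirst d a w \<beta> # map2 lpass (a#as) (as @ [1]))"
    using assms a by (subst layers_ok_Cons) (auto simp: lfirst_def zr_def)
  moreover have "netI d Ns w \<beta> = lfirst d a w \<beta> # map2 lpass (a#as) (as @ [1])"
    by (simp add: netI_def Ns)
  moreover have "d # Ns @ [1] = d # a # (as @ [1])" by (simp add: Ns)
  ultimately show ?thesis by simp
qed

lemma eval_netI:
  assumes "Ns \<noteq> []" "\<forall>n\<in>set Ns. 0 < n"
  shows "hd (net_eval (netI d Ns w \<beta>) x) = max 0 (sum_list (map2 (*) w x) + \<beta>)"
proof -
  obtain a as where Ns: "Ns = a # as" using assms(1) by (cases Ns) auto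
  obtain c cs where cs: "as @ [1] = c # cs" by (cases "as @ [1]") auto
  have a: "a \<ge> 1" using assms Ns by auto
  have "affine (lfirst d a w \<beta>) x = (sum_list (map2 (*) w x) + \<beta>) # zr (a - 1)"
    unfolding affine_def lfirst_def fst_conv snd_conv by (simp add: affine_zero_rows)
  moreover have m2: "map2 lpass (a # as) (as @ [1]) = lpass a c # map2 lpass as cs" by (simp only: cs) simp
  ultimately have "net_eval (netI d Ns w \<beta>) x
     = net_eval (map2 lpass (a#as) (as @ [1])) (relu ((sum_list (map2 (*) w x) + \<beta>) # zr (a - 1)))"
    by (simp add: netI_def Ns m2)
  also have "relu ((sum_list (map2 (*) w x) + \<beta>) # zr (a - 1)) = max 0 (sum_list (map2 (*) w x) + \<beta>) # zr (a - 1)"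
    by (simp add: relu_def zr_def)
  finally have "net_eval (netI d Ns w \<beta>) x
     = net_eval (map2 lpass (a#as) (as @ [1])) (max 0 (sum_list (map2 (*) w x) + \<beta>) # zr (a - 1))" .
  then show ?thesis using eval_pass[of a as] assms Ns by simp
qed

lemma NN_netI: "Ns \<noteq> [] \<Longrightarrow> \<forall>n\<in>set Ns. 0 < n \<Longrightarrow> length w = d \<Longrightarrow>
   (\<lambda>x. max 0 (sum_list (map2 (*) w x) + \<beta>)) \<in> NN d Ns"
  unfolding NN_def
  using lo_netI[of Ns w d \<beta>] eval_netI[of Ns d w \<beta>] by (intro CollectI exI[of _ "netI d Ns w \<beta>"]) auto


definition lab :: "real \<Rightarrow> real" where
  "lab t = (if 0 < t \<and> even (nat \<lfloor>1 / t\<rfloor>) then 1 else 0)"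

definition fa :: "real \<Rightarrow> real list \<Rightarrow> real" where
  "fa a x = (if x ! 0 = a then 1 else lab (x ! 0))"

lemma K: "(x::real) > 0 \<Longrightarrow> 1/x - 1/(x+1) = (1/x) * (1/(x+1))"
proof -
  assume x: "x > 0"
  have "x + 1 > 0" using x by simp
  then show ?thesis using x by (simp add: field_simps)
qed
lemma A: "(x::real) > 0 \<Longrightarrow> (1/x + 1/(x+1))/2 - 1/(2*x*(x+1)) = 1/(x+1) \<and> (1/x + 1/(x+1))/2 + 1/(2*x*(x+1)) = 1/x"
proof -
  assume x: "x > 0"
  define u where "u = 1/x"
  define v where "v = 1/(x+1)"
  define p where "p = u * v"
  have e: "1/(2*x*(x+1)) = p/2" by (simp add: p_def u_def v_def)
  have "u - v = p" using K[OF x] by (simp add: p_def u_def v_def)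
  then show ?thesis unfolding e u_def[symmetric] v_def[symmetric] by (simp add: field_simps)
qed
lemma C: "(x::real) > 0 \<Longrightarrow> (1/x + 1/(x+1))/2 - (1/(x+1) + 1/(x+1+1))/2 = 1/(x*(x+2))"
proof -
  assume x: "x > 0"
  have k3: "1/x - 1/(x+2) = 2 * (1/(x*(x+2)))"
  proof -
    have "x + 2 > 0" using x by simp
    then show ?thesis using x by (simp add: field_simps)
  qed
  have "x + 1 + 1 = x + 2" by simp
  then show ?thesis using k3 by (simp add: algebra_simps)
qed

lemma cc_alt: "cc m = (1 / real m + 1 / (real m + 1)) / 2"
  by (simp only: cc_def of_nat_add of_nat_1)

lemma linf_nth: "j < length v \<Longrightarrow> \<bar>v ! j\<bar> \<le> linf v"
  unfolding linf_def by (intro Max_ge) auto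

lemma linf_nonneg: "0 \<le> linf v"
  unfolding linf_def by (intro Max_ge) auto

lemma linf_le: "0 \<le> c \<Longrightarrow> (\<And>j. j < length v \<Longrightarrow> \<bar>v ! j\<bar> \<le> c) \<Longrightarrow> linf v \<le> c"
  unfolding linf_def by (intro Max.boundedI) (auto simp: in_set_conv_nth)

lemma vsub_nth: "j < length v \<Longrightarrow> j < length w \<Longrightarrow> vsub v w ! j = v ! j - w ! j"
  by (simp add: vsub_def)

lemma vsub_length: "length (vsub v w) = min (length v) (length w)"
  by (simp add: vsub_def)

lemma lab_near:
  assumes m: "1 \<le> m" and z: "\<bar>z - cc m\<bar> < 1 / (2 * real m * (real m + 1))"
  shows "lab z = (if even m then 1 else 0)"
proof -
  have e1: "cc m - 1 / (2 * real m * (real m + 1)) = 1 / (real m + 1)"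
   and e2: "cc m + 1 / (2 * real m * (real m + 1)) = 1 / real m"
    using A[of "real m"] m by (simp_all only: cc_alt)
  have zl: "1 / (real m + 1) < z" "z < 1 / real m" using z e1 e2 by (auto simp: abs_less_iff)
  have zp: "0 < z" using zl(1) m by (smt (verit) divide_pos_pos of_nat_0_le_iff)
  have "real m < 1 / z" using zl(2) zp m by (simp add: field_simps)
  moreover have "1 / z < real m + 1" using zl(1) zp m by (simp add: field_simps)
  ultimately have "\<lfloor>1 / z\<rfloor> = int m" by (simp add: floor_eq_iff)
  then show ?thesis using zp by (simp add: lab_def)
qed

lemma eps'_le: "1 \<le> m \<Longrightarrow> m \<le> 2 * r \<Longrightarrow> eps' r \<le> 1 / (2 * real m * (real m + 1))"
proof -
  assume m: "1 \<le> m" "m \<le> 2 * r"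
  have "real m \<le> 2 * real r" using m by simp
  then have "2 * real m * (real m + 1) \<le> 2 * (2 * real r) * (2 * real r + 1)"
    by (intro mult_mono) auto
  also have "\<dots> \<le> (4 * real r + 3) * (4 * real r + 4)" by (simp add: algebra_simps)
  finally have "2 * real m * (real m + 1) \<le> (4 * real r + 3) * (4 * real r + 4)" .
  moreover have "0 < 2 * real m * (real m + 1)" using m by simp
  ultimately show ?thesis unfolding eps'_def by (intro divide_left_mono) auto
qed

lemma cc_gap: "1 \<le> m \<Longrightarrow> m < m' \<Longrightarrow> m' \<le> 2 * r \<Longrightarrow> 2 * eps' r \<le> cc m - cc m'"
proof -
  assume m: "1 \<le> m" "m < m'" "m' \<le> 2 * r"
  have "cc m - cc (m + 1) = 1 / (real m * (real m + 2))"
  proof -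
    have "cc (m + 1) = (1/(real m + 1) + 1/(real m + 2))/2"
      by (simp only: cc_def of_nat_add of_nat_1 add.assoc one_add_one) simp
    then show ?thesis using C[of "real m"] m by (simp only: cc_alt) (simp add: add.assoc)
  qed
  moreover have "cc m' \<le> cc (m + 1)"
    using cc_decr[of "m+1" m'] m by (cases "m' = m + 1") auto
  moreover have "2 * eps' r \<le> 1 / (real m * (real m + 2))"
  proof -
    have "real m \<le> 2 * real r" using m by simp
    then have "real m * (real m + 2) \<le> (2 * real r) * (2 * real r + 2)"
      by (intro mult_mono) auto
    also have "\<dots> \<le> (4 * real r + 3) * (4 * real r + 4) / 2" by (simp add: algebra_simps)
    finally have A: "real m * (real m + 2) \<le> (4 * real r + 3) * (4 * real r + 4) / 2" .
    have B: "0 < real m * (real m + 2)" using m by simp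
    have "2 * eps' r = 1 / ((4 * real r + 3) * (4 * real r + 4) / 2)" by (simp add: eps'_def)
    also have "\<dots> \<le> 1 / (real m * (real m + 2))" using A B by (intro divide_left_mono) auto
    finally show ?thesis .
  qed
  ultimately show ?thesis by linarith
qed

lemma TT_length: "length (TT r d y0 y1) = r" by (simp add: TT_def)

lemma TT_nth: "i < r \<Longrightarrow> TT r d y0 y1 ! i = pt r d y0 y1 i" by (simp add: TT_def)

lemma pt_length: "d \<ge> 2 \<Longrightarrow> length (pt r d y0 y1 i) = d" by (simp add: pt_def zr_def)

lemma pt_0: "pt r d y0 y1 i ! 0 = cc (r + i)" by (simp add: pt_def)

lemma pt_1: "pt r d y0 y1 i ! 1 = (if even (r + i) then y1 else y0)" by (simp add: pt_def)

lemma cc_le3: "3 \<le> m \<Longrightarrow> cc m < 1/3 \<and> 0 < cc m"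
proof -
  assume m: "3 \<le> m"
  have "cc m < 1 / real m" "1 / real (m+1) < cc m" using cc_bounds[of m] m by auto
  moreover have "1 / real m \<le> 1/3" using m by (simp add: field_simps)
  moreover have "0 < 1 / real (m+1)" by simp
  ultimately show ?thesis by linarith
qed

lemma fa_pt: "3 \<le> r \<Longrightarrow> 1/2 < a \<Longrightarrow> fa a (pt r d y0 y1 i) = (if even (r + i) then 1 else 0)"
proof -
  assume r: "3 \<le> r" and a: "1/2 < a"
  have c: "cc (r + i) < 1/3" using cc_le3[of "r+i"] r by auto
  have "lab (cc (r+i)) = (if even (r + i) then 1 else 0)"
    using r by (intro lab_near) (auto intro!: divide_pos_pos)
  then show ?thesis using c a by (simp add: fa_def pt_0)
qed

lemma pt_cube: "d \<ge> 2 \<Longrightarrow> 3 \<le> r \<Longrightarrow> y0 \<in> {0..1} \<Longrightarrow> y1 \<in> {0..1} \<Longrightarrow> pt r d y0 y1 i \<in> cube d"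
proof -
  assume d: "d \<ge> 2" and r: "3 \<le> r" and y: "y0 \<in> {0..1}" "y1 \<in> {0..1}"
  have c: "0 < cc (r+i)" "cc (r+i) < 1/3" using cc_le3[of "r+i"] r by auto
  show ?thesis unfolding cube_def using d c y by (auto simp: pt_def zr_def)
qed

lemma TT_S:
  assumes d: "d \<ge> 2" and r: "3 \<le> r" and y: "y0 \<in> {0..1}" "y1 \<in> {0..1}" and a: "1/2 < a"
  shows "TT r d y0 y1 \<in> S (fa a) d (eps' r)"
  unfolding S_def
proof (intro CollectI conjI ballI impI)
  have inj: "inj_on (pt r d y0 y1) (set [0..<r])"
  proof (rule inj_onI)
    fix i j assume "pt r d y0 y1 i = pt r d y0 y1 j"
    then have "cc (r + i) = cc (r + j)" by (metis pt_0)
    then show "i = j" using cc_decr[of "r+i" "r+j"] cc_decr[of "r+j" "r+i"] r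
      by (cases i j rule: linorder_cases) auto
  qed
  then show "distinct (TT r d y0 y1)" by (simp add: TT_def distinct_map)
  show "set (TT r d y0 y1) \<subseteq> cube d" using pt_cube[OF d r y] by (auto simp: TT_def)
next
  fix x y assume xy: "x \<in> set (TT r d y0 y1)" "y \<in> set (TT r d y0 y1)" "x \<noteq> y"
  then obtain i j where ij: "i < r" "j < r" "x = pt r d y0 y1 i" "y = pt r d y0 y1 j" by (auto simp: TT_def)
  then have "i \<noteq> j" using xy by auto
  have l: "0 < length (vsub x y)" using ij d by (simp add: vsub_length pt_length)
  have v0: "vsub x y ! 0 = cc (r + i) - cc (r + j)" using ij d by (simp add: vsub_nth pt_length pt_0)
  have "2 * eps' r \<le> \<bar>cc (r + i) - cc (r + j)\<bar>"
  proof (cases "i < j")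
    case True then show ?thesis using cc_gap[of "r+i" "r+j" r] r ij by auto
  next
    case False then have "j < i" using \<open>i\<noteq>j\<close> by simp
    then show ?thesis using cc_gap[of "r+j" "r+i" r] r ij by auto
  qed
  also have "\<dots> \<le> linf (vsub x y)" using linf_nth[OF l] v0 by simp
  finally show "2 * eps' r \<le> linf (vsub x y)" .
next
  fix x z assume x: "x \<in> set (TT r d y0 y1)" and z: "z \<in> cube d" and lz: "linf (vsub z x) < eps' r"
  then obtain i where i: "i < r" "x = pt r d y0 y1 i" by (auto simp: TT_def)
  have lzd: "length z = d" using z by (simp add: cube_def)
  have l: "0 < length (vsub z x)" using i d lzd by (simp add: vsub_length pt_length)
  have "\<bar>z ! 0 - cc (r + i)\<bar> < eps' r"
    using linf_nth[OF l] lz i d lzd by (simp add: vsub_nth pt_length pt_0)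
  also have "eps' r \<le> 1 / (2 * real (r + i) * (real (r + i) + 1))"
    using i r by (intro eps'_le) auto
  finally have zn: "\<bar>z ! 0 - cc (r + i)\<bar> < 1 / (2 * real (r + i) * (real (r + i) + 1))" .
  then have "lab (z ! 0) = (if even (r + i) then 1 else 0)" using r by (intro lab_near) auto
  moreover have "z ! 0 < 1/2"
  proof -
    have "(2::real) * 3 * (3 + 1) \<le> 2 * real (r + i) * (real (r + i) + 1)"
      using r by (intro mult_mono) auto
    then have "1 / (2 * real (r + i) * (real (r + i) + 1)) \<le> 1 / ((2::real) * 3 * (3 + 1))"
      by (intro divide_left_mono) auto
    then have "1 / (2 * real (r + i) * (real (r + i) + 1)) \<le> 1/6" by simp
    moreover have "z ! 0 - cc (r + i) < 1 / (2 * real (r + i) * (real (r + i) + 1))"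
      using zn by (simp add: abs_less_iff)
    ultimately show ?thesis using cc_le3[of "r+i"] r by linarith
  qed
  ultimately have "fa a z = (if even (r + i) then 1 else 0)" using a by (simp add: fa_def)
  then show "fa a z = fa a x" using fa_pt[OF r a] i by simp
qed


definition rnd :: "nat \<Rightarrow> real \<Rightarrow> real" where
  "rnd k x = of_int \<lfloor>x * 2^k + 1/2\<rfloor> / 2^k"

lemma rnd_err: "\<bar>rnd k x - x\<bar> \<le> (1/2)^(k+1)"
proof -
  define f where "f = \<lfloor>x * 2^k + 1/2\<rfloor>"
  have "of_int f \<le> x * 2^k + 1/2" "x * 2^k + 1/2 < of_int f + 1" unfolding f_def by linarith+
  then have "of_int f - x * 2^k \<le> 1/2" "-(of_int f - x * 2^k) \<le> 1/2" by linarith+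
  then have A: "\<bar>of_int f - x * 2^k\<bar> \<le> 1/2" by (simp only: abs_le_iff)
  have "rnd k x - x = (of_int f - x * 2^k) / 2^k" by (simp add: rnd_def f_def field_simps)
  then have "\<bar>rnd k x - x\<bar> = \<bar>of_int f - x * 2^k\<bar> / 2^k" by simp
  also have "\<dots> \<le> (1/2) / 2^k" using A by (intro divide_right_mono) auto
  also have "\<dots> = (1/2)^(k+1)" by (simp add: power_divide)
  finally show ?thesis .
qed

lemma rnd_dy: "\<exists>m::int. rnd k x = of_int m / 2^k"
  unfolding rnd_def by blast

definition orc :: "real list list \<Rightarrow> nat \<Rightarrow> nat \<Rightarrow> real list" where
  "orc T k i = (if i < length T then map (rnd k) (T ! i) else [])"

lemma half_pow_le: "k \<le> K \<Longrightarrow> ((1::real)/2)^(K+1) \<le> (1/2)^(k+1)"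
  by (intro power_decreasing) auto

lemma adm_orc:
  assumes T: "set T \<subseteq> cube d"
  shows "admissible_oracle d T (orc T)"
proof -
  have L: "length (T ! i) = d" if i: "i < length T" for i using T nth_mem[OF i] by (auto simp: cube_def)
  have H: "\<bar>orc T k i ! j - T ! i ! j\<bar> \<le> (1/2)^k \<and> (\<exists>m::int. orc T k i ! j = of_int m / 2^k)"
    if i: "i < length T" and j: "j < d" for k i j
  proof
    have "\<bar>orc T k i ! j - T ! i ! j\<bar> \<le> (1/2)^(k+1)" using i j L[OF i] rnd_err by (simp add: orc_def)
    also have "\<dots> \<le> (1/2)^k" by (intro power_decreasing) auto
    finally show "\<bar>orc T k i ! j - T ! i ! j\<bar> \<le> (1/2)^k" .
    show "\<exists>m::int. orc T k i ! j = of_int m / 2^k" using i j L[OF i] rnd_dy by (simp add: orc_def)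
  qed
  have LL: "length (orc T k i) = d" if "i < length T" for k i using that L by (simp add: orc_def)
  have E: "orc T k i = []" if "length T \<le> i" for k i using that by (simp add: orc_def)
  show ?thesis unfolding admissible_oracle_def using H LL E by blast
qed

lemma adm_mix:
  assumes len: "length T0 = length T1" and T0: "set T0 \<subseteq> cube d" and T1: "set T1 \<subseteq> cube d"
    and close: "\<forall>i<length T1. \<forall>l<d. \<bar>T0 ! i ! l - T1 ! i ! l\<bar> \<le> (1/2)^(K+1)"
  shows "admissible_oracle d T1 (\<lambda>k i. if k \<le> K then orc T0 k i else orc T1 k i)"
proof -
  let ?O = "\<lambda>k i. if k \<le> K then orc T0 k i else orc T1 k i"
  have l1: "length (T1 ! i) = d" if i: "i < length T1" for i using T1 nth_mem[OF i] by (auto simp: cube_def)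
  have l0: "length (T0 ! i) = d" if i: "i < length T1" for i
  proof -
    have i0: "i < length T0" using i len by simp
    show ?thesis using T0 nth_mem[OF i0] by (auto simp: cube_def)
  qed
  have LL: "length (?O k i) = d" if i: "i < length T1" for k i using i l0[OF i] l1[OF i] len by (simp add: orc_def)
  have D: "\<exists>m::int. ?O k i ! j = of_int m / 2^k" if i: "i < length T1" and j: "j < d" for k i j
    using i j l0[OF i] l1[OF i] len rnd_dy by (simp add: orc_def)
  have A: "\<bar>?O k i ! j - T1 ! i ! j\<bar> \<le> (1/2)^k" if i: "i < length T1" and j: "j < d" for k i j
  proof (cases "k \<le> K")
    case True
    have a: "\<bar>rnd k (T0 ! i ! j) - T0 ! i ! j\<bar> \<le> (1/2)^(k+1)" by (rule rnd_err)
    have b0: "\<bar>T0 ! i ! j - T1 ! i ! j\<bar> \<le> (1/2)^(K+1)" using close i j by blast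
    have b: "\<bar>T0 ! i ! j - T1 ! i ! j\<bar> \<le> (1/2)^(k+1)" using b0 half_pow_le[OF True] by (rule order_trans)
    have "(1::real)/2^(k+1) + 1/2^(k+1) = 1/2^k" by simp
    then have c: "((1::real)/2)^(k+1) + (1/2)^(k+1) = (1/2)^k" by (simp add: power_divide)
    have "\<bar>rnd k (T0 ! i ! j) - T1 ! i ! j\<bar> \<le> (1/2)^k" using a b c by linarith
    then show ?thesis using True i j l0[OF i] len by (simp add: orc_def)
  next
    case False
    have "\<bar>rnd k (T1 ! i ! j) - T1 ! i ! j\<bar> \<le> (1/2)^(k+1)" by (rule rnd_err)
    also have "\<dots> \<le> (1/2)^k" by (intro power_decreasing) auto
    finally show ?thesis using False i j l1[OF i] by (simp add: orc_def)
  qed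
  have E: "?O k i = []" if "length T1 \<le> i" for k i using that len by (simp add: orc_def)
  show ?thesis unfolding admissible_oracle_def using A D LL E by blast
qed

lemma linf_le_norms: "nrm \<in> {lone, ltwo, linf} \<Longrightarrow> linf v \<le> nrm v"
proof -
  assume n: "nrm \<in> {lone, ltwo, linf}"
  have sets: "\<bar>x\<bar> \<le> nrm v" if "x \<in> set v" for x
  proof -
    have "\<bar>x\<bar> \<le> lone v" unfolding lone_def using that by (intro member_le_sum_list) auto
    moreover have "\<bar>x\<bar> \<le> ltwo v"
    proof -
      have "x^2 \<le> sum_list (map (\<lambda>t. t^2) v)" using that by (intro member_le_sum_list) auto
      then have "sqrt (x^2) \<le> ltwo v" unfolding ltwo_def by (rule real_sqrt_le_mono)
      then show ?thesis by simp
    qed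
    moreover have "\<bar>x\<bar> \<le> linf v" unfolding linf_def using that by (intro Max_ge) auto
    ultimately show ?thesis using n by auto
  qed
  have nn: "0 \<le> nrm v"
  proof -
    have "0 \<le> lone v" unfolding lone_def by (intro sum_list_nonneg) auto
    moreover have "0 \<le> ltwo v" unfolding ltwo_def by (intro real_sqrt_ge_zero sum_list_nonneg) auto
    moreover have "0 \<le> linf v" by (rule linf_nonneg)
    ultimately show ?thesis using n by auto
  qed
  show ?thesis unfolding linf_def using sets nn by (intro Max.boundedI) auto
qed

lemma linf_map: "linf (map h [0..<r]) = (MAX i\<in>{..r}. (if i < r then \<bar>h i\<bar> else 0))"
proof -
  have "insert 0 (abs ` set (map h [0..<r])) = (\<lambda>i. if i < r then \<bar>h i\<bar> else 0) ` {..r}"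
  proof (rule set_eqI, rule iffI)
    fix x assume "x \<in> insert 0 (abs ` set (map h [0..<r]))"
    then consider "x = 0" | i where "i < r" "x = \<bar>h i\<bar>" by auto
    then show "x \<in> (\<lambda>i. if i < r then \<bar>h i\<bar> else 0) ` {..r}"
    proof cases
      case 1 then show ?thesis by (intro image_eqI[of _ _ r]) auto
    next
      case 2 then show ?thesis by (intro image_eqI[of _ _ i]) auto
    qed
  next
    fix x assume "x \<in> (\<lambda>i. if i < r then \<bar>h i\<bar> else 0) ` {..r}"
    then show "x \<in> insert 0 (abs ` set (map h [0..<r]))" by (auto split: if_splits)
  qed
  then show ?thesis unfolding linf_def by simp
qed

lemma meas_far:
  assumes len: "\<forall>\<omega>\<in>space M. length (g \<omega>) = r" and meas: "\<forall>i<r. (\<lambda>\<omega>. g \<omega> ! i) \<in> borel_measurable M"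
    and lv: "length v = r" and n: "nrm \<in> {lone, ltwo, linf}"
  shows "{\<omega>\<in>space M. nrm (vsub (g \<omega>) v) \<ge> \<tau>} \<in> sets M"
proof -
  have eq: "vsub (g \<omega>) v = map (\<lambda>i. g \<omega> ! i - v ! i) [0..<r]" if "\<omega> \<in> space M" for \<omega>
    using len that lv by (intro nth_equalityI) (auto simp: vsub_def)
  define G where "G \<omega> = nrm (map (\<lambda>i. g \<omega> ! i - v ! i) [0..<r])" for \<omega>
  have mi: "(\<lambda>\<omega>. g \<omega> ! i - v ! i) \<in> borel_measurable M" if "i < r" for i
    using meas that by (intro borel_measurable_diff) auto
  have "G \<in> borel_measurable M"
  proof -
    have "lone (map h [0..<r]) = (\<Sum>i\<in>{0..<r}. \<bar>h i\<bar>)" for h :: "nat \<Rightarrow> real"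
      by (simp add: lone_def o_def interv_sum_list_conv_sum_set_nat)
    moreover have "ltwo (map h [0..<r]) = sqrt (\<Sum>i\<in>{0..<r}. (h i)^2)" for h :: "nat \<Rightarrow> real"
      by (simp add: ltwo_def o_def interv_sum_list_conv_sum_set_nat)
    moreover have "(\<lambda>\<omega>. \<Sum>i\<in>{0..<r}. \<bar>g \<omega> ! i - v ! i\<bar>) \<in> borel_measurable M"
      using mi by (intro borel_measurable_sum) auto
    moreover have "(\<lambda>\<omega>. sqrt (\<Sum>i\<in>{0..<r}. (g \<omega> ! i - v ! i)^2)) \<in> borel_measurable M"
    proof -
      have "(\<lambda>\<omega>. \<Sum>i\<in>{0..<r}. (g \<omega> ! i - v ! i)^2) \<in> borel_measurable M"
        using mi by (intro borel_measurable_sum borel_measurable_power) auto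
      then show ?thesis using measurable_compose[OF _ borel_measurable_sqrt] by blast
    qed
    moreover have "(\<lambda>\<omega>. MAX i\<in>{..r}. (if i < r then \<bar>g \<omega> ! i - v ! i\<bar> else 0)) \<in> borel_measurable M"
    proof (intro borel_measurable_Max)
      fix i assume "i \<in> {..r}"
      show "(\<lambda>\<omega>. if i < r then \<bar>g \<omega> ! i - v ! i\<bar> else 0) \<in> borel_measurable M"
        using mi[of i] by (cases "i < r") auto
    qed simp
    ultimately show ?thesis using n unfolding G_def by (auto simp: linf_map)
  qed
  then have "{\<omega>\<in>space M. \<tau> \<le> G \<omega>} \<in> sets M" by measurable
  moreover have "{\<omega>\<in>space M. nrm (vsub (g \<omega>) v) \<ge> \<tau>} = {\<omega>\<in>space M. \<tau> \<le> G \<omega>}"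
    using eq unfolding G_def by auto
  ultimately show ?thesis by simp
qed

lemma outer_lemma:
  assumes P: "prob_space M" and q: "q < 1"
    and mono: "\<And>K. G K \<subseteq> G (Suc K)" and cov: "space M \<subseteq> (\<Union>K. G K)"
  shows "\<exists>K. \<forall>B\<in>sets M. G K \<subseteq> B \<longrightarrow> measure M B > q"
proof (rule ccontr)
  interpret prob_space M by (rule P)
  assume "\<not> ?thesis"
  then have "\<forall>K. \<exists>B. B \<in> sets M \<and> G K \<subseteq> B \<and> measure M B \<le> q" by (auto simp: not_less)
  then obtain B where B: "\<And>K. B K \<in> sets M" "\<And>K. G K \<subseteq> B K" "\<And>K. measure M (B K) \<le> q" by metis
  define H where "H K = space M \<inter> (\<Inter>j\<in>{K..}. B j)" for K
  have Hs: "H K \<in> sets M" for K unfolding H_def using B(1) by auto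
  have Hinc: "incseq H" unfolding H_def incseq_def by auto
  have Gmono: "G K \<subseteq> G j" if "K \<le> j" for K j
    using that by (rule lift_Suc_mono_le[of G, OF mono])
  have Hcov: "(\<Union>K. H K) = space M"
  proof
    show "(\<Union>K. H K) \<subseteq> space M" unfolding H_def by auto
    show "space M \<subseteq> (\<Union>K. H K)"
    proof
      fix w assume w: "w \<in> space M"
      then obtain K where "w \<in> G K" using cov by auto
      then have "w \<in> H K" unfolding H_def using w Gmono B(2) by blast
      then show "w \<in> (\<Union>K. H K)" by blast
    qed
  qed
  have "(\<lambda>K. measure M (H K)) \<longlonglongrightarrow> measure M (\<Union>K. H K)"
    using Hs Hinc by (intro finite_Lim_measure_incseq) auto
  then have lim: "(\<lambda>K. measure M (H K)) \<longlonglongrightarrow> 1" using Hcov prob_space by simp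
  have "measure M (H K) \<le> q" for K
  proof -
    have "H K \<subseteq> B K" unfolding H_def by auto
    then have "measure M (H K) \<le> measure M (B K)" using B(1) Hs by (intro finite_measure_mono) auto
    then show ?thesis using B(3) by (rule order_trans)
  qed
  then have "1 \<le> q" using lim by (intro LIMSEQ_le_const2) auto
  then show False using q by simp
qed

lemma argmin_nonempty:
  assumes "X \<noteq> {}" "\<epsilon> > 0"
  shows "argmin_eps \<epsilon> X g \<noteq> {}"
proof (cases "(INF x\<in>X. g x) = \<top>")
  case True
  then have "\<forall>y\<in>X. g y = \<top>" by (metis INF_lower top.extremum_uniqueI)
  then show ?thesis using assms by (auto simp: argmin_eps_def)
next
  case False
  define m where "m = (INF x\<in>X. g x)"
  have "m < m + ennreal \<epsilon>" using False assms(2) unfolding m_def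
    by (simp add: ennreal_add_left_cancel_less top.not_eq_extremum)
  then obtain x where x: "x \<in> X" "g x < m + ennreal \<epsilon>" unfolding m_def by (auto simp: INF_less_iff)
  have "\<forall>y\<in>X. g x \<le> g y + ennreal \<epsilon>"
  proof
    fix y assume "y \<in> X"
    then have "m \<le> g y" unfolding m_def by (rule INF_lower)
    then show "g x \<le> g y + ennreal \<epsilon>" using x(2) by (meson add_right_mono less_imp_le order_trans)
  qed
  then show ?thesis using x(1) by (auto simp: argmin_eps_def)
qed


lemma interp_T':
  assumes d: "d \<ge> 2" and r: "3 \<le> r" and a: "1/2 < a" and s: "s > 0"
    and Ns: "Ns \<noteq> []" "\<forall>n\<in>set Ns. 0 < n"
  shows "\<exists>\<phi>\<in>NN d Ns. map \<phi> (TT r d (y0 - s) y0) = map (fa a) (TT r d (y0 - s) y0)"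
proof -
  define w where "w = 0 # (1/s) # zr (d - 2)"
  define \<beta> where "\<beta> = -(y0 - s)/s"
  have lw: "length w = d" using d by (simp add: w_def zr_def)
  let ?\<phi> = "\<lambda>x. max 0 (sum_list (map2 (*) w x) + \<beta>)"
  have "?\<phi> \<in> NN d Ns" using NN_netI[OF Ns lw] by simp
  moreover have "map ?\<phi> (TT r d (y0 - s) y0) = map (fa a) (TT r d (y0 - s) y0)"
  proof (rule nth_equalityI)
    show "length (map ?\<phi> (TT r d (y0 - s) y0)) = length (map (fa a) (TT r d (y0 - s) y0))" by simp
    fix i assume "i < length (map ?\<phi> (TT r d (y0 - s) y0))"
    then have i: "i < r" by (simp add: TT_length)
    define yv where "yv = (if even (r + i) then y0 else y0 - s)"
    have pt: "TT r d (y0 - s) y0 ! i = cc (r + i) # yv # zr (d - 2)"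
      using i by (simp add: TT_nth pt_def yv_def)
    have "sum_list (map2 (*) w (TT r d (y0 - s) y0 ! i)) = yv / s"
      unfolding pt w_def using sum_zr[of "d-2" "zr (d-2)"] by simp
    moreover have "\<beta> = - ((y0 - s) / s)" unfolding \<beta>_def by (rule minus_divide_left[symmetric])
    ultimately have "?\<phi> (TT r d (y0 - s) y0 ! i) = max 0 (yv / s - (y0 - s) / s)" by simp
    also have "\<dots> = (if even (r + i) then 1 else 0)"
      using s by (simp add: yv_def diff_divide_distrib[symmetric])
    also have "\<dots> = fa a (TT r d (y0 - s) y0 ! i)" using fa_pt[OF r a] i by (simp add: TT_nth)
    finally show "map ?\<phi> (TT r d (y0 - s) y0) ! i = map (fa a) (TT r d (y0 - s) y0) ! i"
      using i by (simp add: TT_length)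
  qed
  ultimately show ?thesis by blast
qed

lemma pt_diff: "\<bar>pt r d y y i ! l - pt r d (y - s) y i ! l\<bar> \<le> \<bar>s\<bar>"
proof -
  consider "l = 0" | "l = 1" | l' where "l = Suc (Suc l')" by (metis One_nat_def not0_implies_Suc)
  then show ?thesis
  proof cases
    case 1 then show ?thesis by (simp add: pt_def)
  next
    case 2 then show ?thesis by (simp add: pt_def)
  next
    case 3 then show ?thesis by (simp add: pt_def)
  qed
qed

lemma NN_nonempty: "Ns \<noteq> [] \<Longrightarrow> \<forall>n\<in>set Ns. 0 < n \<Longrightarrow> NN d Ns \<noteq> {}"
  using NN_netI[of Ns "zr d" d 0] by (auto simp: zr_def)

lemma prod_ge1: "prod_list (map Suc Ns) \<ge> 1"
  by (induction Ns) auto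


lemma main_f:
  fixes Ns :: "nat list" and r :: nat and \<epsilon> \<epsilon>h p :: real and M :: "(nat \<Rightarrow> bool) measure"
  assumes d: "d \<ge> 2" and a: "1/2 < a"
    and Ns: "Ns \<noteq> []" "\<forall>n\<in>set Ns. 0 < n" and r: "r \<ge> 3 * prod_list (map Suc Ns)"
    and eps: "\<epsilon> > 0" "0 < \<epsilon>h" "\<epsilon>h < 1/2" and R: "R \<in> CF_eps r \<epsilon> \<epsilon>h"
    and RA: "randomised_algorithm M d r \<Gamma>" and p: "0 \<le> p" "p < 1/2"
  shows "\<exists>C2. uncountable C2 \<and> C2 \<subseteq> S (fa a) d (eps' r) \<and>
          (\<forall>T\<in>C2. length T = r \<and>
             argmin_eps \<epsilon> (NN d Ns) (\<lambda>\<phi>. R (map \<phi> T) (map (fa a) T)) \<noteq> {} \<and>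
             (\<exists>Or. admissible_oracle d T Or \<and>
                (\<forall>\<phi>\<in>argmin_eps \<epsilon> (NN d Ns) (\<lambda>\<phi>. R (map \<phi> T) (map (fa a) T)).
                   \<forall>nrm\<in>{lone, ltwo, linf}.
                     measure M {\<omega>\<in>space M. nrm (vsub (\<Gamma> \<omega> Or) (map \<phi> T)) \<ge> 1/4 - 3*\<epsilon>h/4} > p)))"
proof -
  define f where "f = fa a"
  define \<tau> :: real where "\<tau> = 1/4 - 3*\<epsilon>h/4"
  define AM where "AM T = argmin_eps \<epsilon> (NN d Ns) (\<lambda>\<phi>. R (map \<phi> T) (map f T))" for T
  define Fails where "Fails T Or = (\<forall>\<phi>\<in>AM T. \<forall>nrm\<in>{lone, ltwo, linf}.
      measure M {\<omega>\<in>space M. nrm (vsub (\<Gamma> \<omega> Or) (map \<phi> T)) \<ge> \<tau>} > p)" for T Or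
  have r3: "3 \<le> r" using r prod_ge1[of Ns] by linarith
  have PS: "prob_space M" using RA by (simp add: randomised_algorithm_def)
  then interpret prob_space M .
  have RAall: "\<forall>T Or. length T = r \<and> set T \<subseteq> cube d \<and> admissible_oracle d T Or \<longrightarrow>
       (\<forall>\<omega>\<in>space M. length (\<Gamma> \<omega> Or) = r) \<and>
       (\<forall>i<r. (\<lambda>\<omega>. \<Gamma> \<omega> Or ! i) \<in> borel_measurable M) \<and>
       (\<forall>\<omega>\<in>space M. \<exists>\<Lambda>::(nat \<times> nat) set. finite \<Lambda> \<and>
          (\<forall>T' Or'. length T' = r \<and> set T' \<subseteq> cube d \<and> admissible_oracle d T' Or'
             \<and> (\<forall>(k,i)\<in>\<Lambda>. Or' k i = Or k i) \<longrightarrow> \<Gamma> \<omega> Or' = \<Gamma> \<omega> Or))"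
    using RA unfolding randomised_algorithm_def by (rule conjunct2)
  have RAc: "(\<forall>\<omega>\<in>space M. length (\<Gamma> \<omega> Or) = r) \<and>
       (\<forall>i<r. (\<lambda>\<omega>. \<Gamma> \<omega> Or ! i) \<in> borel_measurable M) \<and>
       (\<forall>\<omega>\<in>space M. \<exists>\<Lambda>::(nat \<times> nat) set. finite \<Lambda> \<and>
          (\<forall>T' Or'. length T' = r \<and> set T' \<subseteq> cube d \<and> admissible_oracle d T' Or'
             \<and> (\<forall>(k,i)\<in>\<Lambda>. Or' k i = Or k i) \<longrightarrow> \<Gamma> \<omega> Or' = \<Gamma> \<omega> Or))"
    if "length T = r" "set T \<subseteq> cube d" "admissible_oracle d T Or" for T Or
  proof -
    have "length T = r \<and> set T \<subseteq> cube d \<and> admissible_oracle d T Or" using that by simp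
    then show ?thesis by (rule RAall[rule_format])
  qed
  have RA1: "\<forall>\<omega>\<in>space M. length (\<Gamma> \<omega> Or) = r"
    if "length T = r" "set T \<subseteq> cube d" "admissible_oracle d T Or" for T Or
    using RAc[OF that] by (rule conjunct1)
  have RA2: "\<forall>i<r. (\<lambda>\<omega>. \<Gamma> \<omega> Or ! i) \<in> borel_measurable M"
    if "length T = r" "set T \<subseteq> cube d" "admissible_oracle d T Or" for T Or
    using RAc[OF that] by (rule conjunct1[OF conjunct2])
  have RA3: "\<forall>\<omega>\<in>space M. \<exists>\<Lambda>::(nat \<times> nat) set. finite \<Lambda> \<and>
          (\<forall>T' Or'. length T' = r \<and> set T' \<subseteq> cube d \<and> admissible_oracle d T' Or'
             \<and> (\<forall>(k,i)\<in>\<Lambda>. Or' k i = Or k i) \<longrightarrow> \<Gamma> \<omega> Or' = \<Gamma> \<omega> Or)"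
    if "length T = r" "set T \<subseteq> cube d" "admissible_oracle d T Or" for T Or
    using RAc[OF that] by (rule conjunct2[OF conjunct2])
  have NNne: "NN d Ns \<noteq> {}" using NN_nonempty[OF Ns] .
  define I where "I = {1/4<..<(3/4::real)}"
  define Tc where "Tc y = TT r d y y" for y
  have Tc_S: "Tc y \<in> S f d (eps' r)" if "y \<in> I" for y
    using TT_S[OF d r3 _ _ a, of y y] that by (auto simp: Tc_def I_def f_def)
  have Tc_cube: "set (Tc y) \<subseteq> cube d" if "y \<in> I" for y using Tc_S[OF that] by (simp add: S_def)
  have Tc_len: "length (Tc y) = r" for y by (simp add: Tc_def TT_length)
  have goal: "?thesis \<longleftrightarrow> (\<exists>C2. uncountable C2 \<and> C2 \<subseteq> S (fa a) d (eps' r) \<and>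
     (\<forall>T\<in>C2. length T = r \<and> AM T \<noteq> {} \<and> (\<exists>Or. admissible_oracle d T Or \<and> Fails T Or)))"
    by (simp only: AM_def Fails_def f_def \<tau>_def)
  have main: "\<exists>C2. uncountable C2 \<and> C2 \<subseteq> S (fa a) d (eps' r) \<and>
     (\<forall>T\<in>C2. length T = r \<and> AM T \<noteq> {} \<and> (\<exists>Or. admissible_oracle d T Or \<and> Fails T Or))"
  proof (cases "\<forall>y\<in>I. Fails (Tc y) (orc (Tc y))")
    case True
    have inj: "inj_on Tc I"
    proof (rule inj_onI)
      fix y y' assume "Tc y = Tc y'"
      then have "Tc y ! 0 ! 1 = Tc y' ! 0 ! 1" by simp
      then show "y = y'" using r3 by (simp add: Tc_def TT_nth pt_def)
    qed
    have "uncountable I" unfolding I_def by (simp add: uncountable_open_interval)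
    then have "uncountable (Tc ` I)" using countable_image_inj_on[OF _ inj] by blast
    moreover have "Tc ` I \<subseteq> S (fa a) d (eps' r)" using Tc_S by (auto simp: f_def)
    moreover have "\<forall>T\<in>Tc ` I. length T = r \<and> AM T \<noteq> {} \<and> (\<exists>Or. admissible_oracle d T Or \<and> Fails T Or)"
    proof
      fix T assume "T \<in> Tc ` I"
      then obtain y where y: "y \<in> I" "T = Tc y" by blast
      have "AM T \<noteq> {}" unfolding AM_def by (rule argmin_nonempty[OF NNne eps(1)])
      moreover have "admissible_oracle d T (orc T)" using adm_orc[OF Tc_cube[OF y(1)]] y(2) by simp
      moreover have "Fails T (orc T)" using True y by blast
      ultimately show "length T = r \<and> AM T \<noteq> {} \<and> (\<exists>Or. admissible_oracle d T Or \<and> Fails T Or)"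
        using Tc_len y(2) by blast
    qed
    ultimately show ?thesis by (intro exI[of _ "Tc ` I"] conjI)
  next
    case False
    then obtain y0 where y0: "y0 \<in> I" "\<not> Fails (Tc y0) (orc (Tc y0))" by blast
    define T0 where "T0 = Tc y0"
    define Or0 where "Or0 = orc T0"
    have T0c: "set T0 \<subseteq> cube d" and T0l: "length T0 = r" using Tc_cube[OF y0(1)] Tc_len by (auto simp: T0_def)
    have adm0: "admissible_oracle d T0 Or0" unfolding Or0_def by (rule adm_orc[OF T0c])
    from y0(2) obtain \<phi>0 nrm0 where phi0: "\<phi>0 \<in> AM T0" and nrm0: "nrm0 \<in> {lone, ltwo, linf}"
      and m0: "\<not> measure M {\<omega>\<in>space M. nrm0 (vsub (\<Gamma> \<omega> Or0) (map \<phi>0 T0)) \<ge> \<tau>} > p"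
      unfolding Fails_def T0_def Or0_def by blast
    define far0 where "far0 = {\<omega>\<in>space M. nrm0 (vsub (\<Gamma> \<omega> Or0) (map \<phi>0 T0)) \<ge> \<tau>}"
    have far0s: "far0 \<in> sets M" unfolding far0_def
      using meas_far[OF RA1[OF T0l T0c adm0] RA2[OF T0l T0c adm0] _ nrm0] T0l by simp
    have m0': "measure M far0 \<le> p" using m0 by (simp add: far0_def)
    have "\<phi>0 \<in> NN d Ns" using phi0 by (simp add: AM_def argmin_eps_def)
    then obtain ps where ps: "layers_ok (d # Ns @ [1]) ps" "\<phi>0 = (\<lambda>x. hd (net_eval ps x))"
      unfolding NN_def by blast
    obtain j0 where j0: "j0 < r" "\<bar>\<phi>0 (T0 ! j0) - (if even (r + j0) then 1 else 0)\<bar> \<ge> 1/2"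
      using nointerp[OF d ps(1) r, of y0] ps(2) unfolding T0_def Tc_def by auto
    define L :: real where "L = (if even (r + j0) then 1 else 0)"
    have j0': "\<bar>\<phi>0 (T0 ! j0) - L\<bar> \<ge> 1/2" using j0 by (simp add: L_def)
    define G where "G K = {\<omega>\<in>space M. \<exists>\<Lambda>::(nat \<times> nat) set. finite \<Lambda> \<and> (\<forall>(k,i)\<in>\<Lambda>. k \<le> K) \<and>
          (\<forall>T' Or'. length T' = r \<and> set T' \<subseteq> cube d \<and> admissible_oracle d T' Or'
             \<and> (\<forall>(k,i)\<in>\<Lambda>. Or' k i = Or0 k i) \<longrightarrow> \<Gamma> \<omega> Or' = \<Gamma> \<omega> Or0)}" for K
    have Gmono: "G K \<subseteq> G (Suc K)" for K
    proof
      fix \<omega> assume "\<omega> \<in> G K"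
      then obtain \<Lambda> :: "(nat \<times> nat) set" where La: "\<omega> \<in> space M" "finite \<Lambda>" "\<forall>(k,i)\<in>\<Lambda>. k \<le> K"
              "\<forall>T' Or'. length T' = r \<and> set T' \<subseteq> cube d \<and> admissible_oracle d T' Or'
                 \<and> (\<forall>(k,i)\<in>\<Lambda>. Or' k i = Or0 k i) \<longrightarrow> \<Gamma> \<omega> Or' = \<Gamma> \<omega> Or0"
        unfolding G_def by blast
      have "\<forall>(k,i)\<in>\<Lambda>. k \<le> Suc K" using La(3) by auto
      then show "\<omega> \<in> G (Suc K)" unfolding G_def using La(1,2,4) by (intro CollectI conjI exI[of _ \<Lambda>]) auto
    qed
    have Gcov: "space M \<subseteq> (\<Union>K. G K)"
    proof
      fix \<omega> assume w: "\<omega> \<in> space M"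
      then obtain \<Lambda> :: "(nat \<times> nat) set" where L: "finite \<Lambda>"
         "\<forall>T' Or'. length T' = r \<and> set T' \<subseteq> cube d \<and> admissible_oracle d T' Or'
             \<and> (\<forall>(k,i)\<in>\<Lambda>. Or' k i = Or0 k i) \<longrightarrow> \<Gamma> \<omega> Or' = \<Gamma> \<omega> Or0"
        using RA3[OF T0l T0c adm0] by blast
      define K where "K = Max (insert 0 (fst ` \<Lambda>))"
      have "\<forall>(k,i)\<in>\<Lambda>. k \<le> K"
      proof (intro ballI, clarify)
        fix k i assume "(k, i) \<in> \<Lambda>"
        then have "k \<in> insert 0 (fst ` \<Lambda>)" by force
        then show "k \<le> K" unfolding K_def using L(1) by (intro Max_ge) auto
      qed
      then have "\<omega> \<in> G K" unfolding G_def using w L by (intro CollectI conjI exI[of _ \<Lambda>]) auto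
      then show "\<omega> \<in> (\<Union>K. G K)" by blast
    qed
    obtain K where K: "\<forall>B\<in>sets M. G K \<subseteq> B \<longrightarrow> measure M B > 2 * p"
      using outer_lemma[OF PS _ Gmono Gcov, of "2*p"] p by auto
    define Sset where "Sset = {0<..<min (1/8) ((1/2::real)^(K+1))}"
    define T' where "T' s = TT r d (y0 - s) y0" for s
    define O' where "O' s = (\<lambda>k i. if k \<le> K then Or0 k i else orc (T' s) k i)" for s
    have y0b: "1/4 < y0" "y0 < 3/4" using y0(1) by (auto simp: I_def)
    have T'S: "T' s \<in> S f d (eps' r)" if "s \<in> Sset" for s
    proof -
      have "s < 1/8" "0 < s" using that by (auto simp: Sset_def)
      then show ?thesis using TT_S[OF d r3 _ _ a, of "y0 - s" y0] y0b by (auto simp: T'_def f_def)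
    qed
    have T'c: "set (T' s) \<subseteq> cube d" if "s \<in> Sset" for s using T'S[OF that] by (simp add: S_def)
    have T'l: "length (T' s) = r" for s by (simp add: T'_def TT_length)
    have injT': "inj_on T' Sset"
    proof (rule inj_onI)
      fix s s' assume "T' s = T' s'"
      define idx where "idx = (if odd r then 0 else (1::nat))"
      have "idx < r" "odd (r + idx)" using r3 by (auto simp: idx_def)
      moreover have "T' s ! idx ! 1 = T' s' ! idx ! 1" using \<open>T' s = T' s'\<close> by simp
      ultimately show "s = s'" by (simp add: T'_def TT_nth pt_def)
    qed
    have "uncountable (T' ` Sset)"
    proof -
      have "(0::real) < min (1/8) ((1/2::real)^(K+1))" by simp
      then have "uncountable Sset" unfolding Sset_def using uncountable_open_interval by blast
      then show ?thesis using injT' countable_image_inj_on by blast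
    qed
    moreover have "T' ` Sset \<subseteq> S (fa a) d (eps' r)" using T'S by (auto simp: f_def)
    moreover have "\<forall>T\<in>T' ` Sset. length T = r \<and> AM T \<noteq> {} \<and> (\<exists>Or. admissible_oracle d T Or \<and> Fails T Or)"
    proof
      fix T assume "T \<in> T' ` Sset"
      then obtain s where s: "s \<in> Sset" "T = T' s" by blast
      have s0: "0 < s" "s \<le> (1/2)^(K+1)" using s(1) by (auto simp: Sset_def)
      have Tl: "length T = r" using s T'l by simp
      have Tc: "set T \<subseteq> cube d" using s T'c by simp
      obtain \<phi>I where phiI: "\<phi>I \<in> NN d Ns" "map \<phi>I T = map f T"
        using interp_T'[OF d r3 a s0(1) Ns, of y0] s by (auto simp: T'_def f_def)
      have R0: "R (map \<phi>I T) (map f T) = 0"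
        using R phiI(2) Tl by (simp add: CF_eps_def CF_def)
      have phiIA: "\<phi>I \<in> AM T" using phiI(1) R0 by (simp add: AM_def argmin_eps_def)
      have admT: "admissible_oracle d T (O' s)"
        unfolding O'_def Or0_def s(2)
      proof (rule adm_mix)
        show "length T0 = length (T' s)" using T0l T'l by simp
        show "set T0 \<subseteq> cube d" by (rule T0c)
        show "set (T' s) \<subseteq> cube d" using T'c s(1) .
        show "\<forall>i<length (T' s). \<forall>l<d. \<bar>T0 ! i ! l - T' s ! i ! l\<bar> \<le> (1/2)^(K+1)"
        proof (intro allI impI)
          fix i l assume i: "i < length (T' s)" and "l < d"
          have "\<bar>T0 ! i ! l - T' s ! i ! l\<bar> \<le> \<bar>s\<bar>"
            using i pt_diff[of r d y0 i l s] by (simp add: T0_def Tc_def T'_def TT_nth TT_length)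
          then show "\<bar>T0 ! i ! l - T' s ! i ! l\<bar> \<le> (1/2)^(K+1)" using s0 by simp
        qed
      qed
      have fj: "f (T ! j0) = L" "f (T0 ! j0) = L"
        using fa_pt[OF r3 a] j0(1) s(2) by (simp_all add: f_def L_def T'_def T0_def Tc_def TT_nth)
      have "Fails T (O' s)"
        unfolding Fails_def
      proof (intro ballI)
        fix \<phi>' nrm assume phi': "\<phi>' \<in> AM T" and nrm: "nrm \<in> {lone, ltwo, linf}"
        have "R (map \<phi>' T) (map f T) \<le> R (map \<phi>I T) (map f T) + ennreal \<epsilon>"
          using phi' phiI(1) by (simp add: AM_def argmin_eps_def)
        then have "R (map \<phi>' T) (map f T) \<le> ennreal \<epsilon>" using R0 by simp
        then have "linf (vsub (map \<phi>' T) (map f T)) \<le> \<epsilon>h" using R Tl by (simp add: CF_eps_def)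
        moreover have "\<bar>vsub (map \<phi>' T) (map f T) ! j0\<bar> \<le> linf (vsub (map \<phi>' T) (map f T))"
          using j0(1) Tl by (intro linf_nth) (simp add: vsub_length)
        ultimately have e': "\<bar>\<phi>' (T ! j0) - L\<bar> \<le> \<epsilon>h" using j0(1) Tl fj by (simp add: vsub_nth)
        define far' where "far' = {\<omega>\<in>space M. nrm (vsub (\<Gamma> \<omega> (O' s)) (map \<phi>' T)) \<ge> \<tau>}"
        have far's: "far' \<in> sets M" unfolding far'_def
          using meas_far[OF RA1[OF Tl Tc admT] RA2[OF Tl Tc admT] _ nrm] Tl by simp
        have "G K \<subseteq> far' \<union> far0"
        proof
          fix \<omega> assume w: "\<omega> \<in> G K"
          then have ws: "\<omega> \<in> space M" by (simp add: G_def)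
          show "\<omega> \<in> far' \<union> far0"
          proof (cases "\<omega> \<in> far0")
            case True then show ?thesis by simp
          next
            case False
            then have "nrm0 (vsub (\<Gamma> \<omega> Or0) (map \<phi>0 T0)) < \<tau>" using ws by (auto simp: far0_def)
            then have "linf (vsub (\<Gamma> \<omega> Or0) (map \<phi>0 T0)) < \<tau>" using linf_le_norms[OF nrm0] by (meson le_less_trans)
            moreover have lg: "length (\<Gamma> \<omega> Or0) = r" using RA1[OF T0l T0c adm0] ws by blast
            ultimately have c0: "\<bar>\<Gamma> \<omega> Or0 ! j0 - \<phi>0 (T0 ! j0)\<bar> < \<tau>"
              using linf_nth[of j0 "vsub (\<Gamma> \<omega> Or0) (map \<phi>0 T0)"] j0(1) T0l
              by (simp add: vsub_nth vsub_length)
            obtain \<Lambda> :: "(nat \<times> nat) set" where La: "finite \<Lambda>" "\<forall>(k,i)\<in>\<Lambda>. k \<le> K"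
              "\<forall>T' Or'. length T' = r \<and> set T' \<subseteq> cube d \<and> admissible_oracle d T' Or'
                 \<and> (\<forall>(k,i)\<in>\<Lambda>. Or' k i = Or0 k i) \<longrightarrow> \<Gamma> \<omega> Or' = \<Gamma> \<omega> Or0"
              using w unfolding G_def by blast
            have agr: "\<forall>(k,i)\<in>\<Lambda>. O' s k i = Or0 k i" using La(2) by (auto simp: O'_def)
            have eqG: "\<Gamma> \<omega> (O' s) = \<Gamma> \<omega> Or0"
              using La(3)[rule_format, of T "O' s"] Tl Tc admT agr by simp
            have "\<tau> \<le> \<bar>\<Gamma> \<omega> Or0 ! j0 - \<phi>' (T ! j0)\<bar>"
              using c0 e' j0' eps(2) unfolding \<tau>_def by linarith
            also have "\<dots> \<le> linf (vsub (\<Gamma> \<omega> (O' s)) (map \<phi>' T))"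
              using linf_nth[of j0 "vsub (\<Gamma> \<omega> (O' s)) (map \<phi>' T)"] j0(1) Tl lg eqG
              by (simp add: vsub_nth vsub_length)
            also have "\<dots> \<le> nrm (vsub (\<Gamma> \<omega> (O' s)) (map \<phi>' T))" by (rule linf_le_norms[OF nrm])
            finally show ?thesis using ws by (simp add: far'_def)
          qed
        qed
        then have "measure M (far' \<union> far0) > 2 * p" using K far's far0s by blast
        moreover have "measure M (far' \<union> far0) \<le> measure M far' + measure M far0"
          using far's far0s by (rule measure_Un_le)
        ultimately have "measure M far' > p" using m0' by linarith
        then show "p < measure M {\<omega>\<in>space M. \<tau> \<le> nrm (vsub (\<Gamma> \<omega> (O' s)) (map \<phi>' T))}"
          by (simp add: far'_def)
      qed
      then show "length T = r \<and> AM T \<noteq> {} \<and> (\<exists>Or. admissible_oracle d T Or \<and> Fails T Or)"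
        using Tl phiIA admT by blast
    qed
    ultimately show ?thesis by blast
  qed
  then show ?thesis unfolding goal .
qed



lemma lab_half: "1/2 < a \<Longrightarrow> a < 1 \<Longrightarrow> lab a = 0"
proof -
  assume a: "1/2 < a" "a < 1"
  then have "1 < 1/a" "1/a < 2" by (simp_all add: field_simps)
  then have "\<lfloor>1/a\<rfloor> = 1" by (simp add: floor_eq_iff)
  then show ?thesis using a by (simp add: lab_def)
qed

theorem theorem3p4:
  fixes d :: nat
  assumes "d \<ge> 2"
  shows "\<exists>C1 :: (real list \<Rightarrow> real) set.
    uncountable ((\<lambda>f. restrict f (cube d)) ` C1) \<and> (\<forall>f\<in>C1. classification_fn d f) \<and>
    (\<forall>f\<in>C1. \<forall>(Ns::nat list) (r::nat) (\<epsilon>::real) (\<epsilon>h::real) R (M::(nat \<Rightarrow> bool) measure) \<Gamma> (p::real).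
       Ns \<noteq> [] \<and> (\<forall>n\<in>set Ns. 0 < n) \<and> r \<ge> 3 * prod_list (map Suc Ns)
       \<and> \<epsilon> > 0 \<and> 0 < \<epsilon>h \<and> \<epsilon>h < 1/2 \<and> R \<in> CF_eps r \<epsilon> \<epsilon>h
       \<and> randomised_algorithm M d r \<Gamma> \<and> 0 \<le> p \<and> p < 1/2 \<longrightarrow>
       (\<exists>C2. uncountable C2 \<and> C2 \<subseteq> S f d (eps' r) \<and>
          (\<forall>T\<in>C2. length T = r \<and>
             argmin_eps \<epsilon> (NN d Ns) (\<lambda>\<phi>. R (map \<phi> T) (map f T)) \<noteq> {} \<and>
             (\<exists>Or. admissible_oracle d T Or \<and>
                (\<forall>\<phi>\<in>argmin_eps \<epsilon> (NN d Ns) (\<lambda>\<phi>. R (map \<phi> T) (map f T)).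
                   \<forall>nrm\<in>{lone, ltwo, linf}.
                     measure M {\<omega>\<in>space M. nrm (vsub (\<Gamma> \<omega> Or) (map \<phi> T)) \<ge> 1/4 - 3*\<epsilon>h/4} > p)))))"
proof -
  define A where "A = {1/2<..<(1::real)}"
  define C1 where "C1 = fa ` A"
  have inj: "inj_on (\<lambda>a. restrict (fa a) (cube d)) A"
  proof (rule inj_onI)
    fix a b assume a: "a \<in> A" and b: "b \<in> A" and eq: "restrict (fa a) (cube d) = restrict (fa b) (cube d)"
    show "a = b"
    proof (rule ccontr)
      assume ne: "a \<noteq> b"
      define x where "x = a # zr (d - 1)"
      have xc: "x \<in> cube d" using a assms by (auto simp: x_def cube_def zr_def A_def)
      have "restrict (fa a) (cube d) x = restrict (fa b) (cube d) x" using eq by simp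
      then have "fa a x = fa b x" using xc by simp
      moreover have "fa a x = 1" by (simp add: fa_def x_def)
      moreover have "fa b x = 0" using ne a lab_half[of a] by (auto simp: fa_def x_def A_def)
      ultimately show False by simp
    qed
  qed
  have "uncountable A" unfolding A_def by (simp add: uncountable_open_interval)
  then have "uncountable ((\<lambda>a. restrict (fa a) (cube d)) ` A)" using countable_image_inj_on[OF _ inj] by blast
  moreover have "(\<lambda>f. restrict f (cube d)) ` C1 = (\<lambda>a. restrict (fa a) (cube d)) ` A"
    unfolding C1_def by (simp add: image_image)
  ultimately have U: "uncountable ((\<lambda>f. restrict f (cube d)) ` C1)" by simp
  have Cl: "\<forall>f\<in>C1. classification_fn d f"
    unfolding C1_def classification_fn_def by (auto simp: fa_def lab_def)
  have Main: "\<forall>f\<in>C1. \<forall>(Ns::nat list) (r::nat) (\<epsilon>::real) (\<epsilon>h::real) R (M::(nat \<Rightarrow> bool) measure) \<Gamma> (p::real).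
       Ns \<noteq> [] \<and> (\<forall>n\<in>set Ns. 0 < n) \<and> r \<ge> 3 * prod_list (map Suc Ns)
       \<and> \<epsilon> > 0 \<and> 0 < \<epsilon>h \<and> \<epsilon>h < 1/2 \<and> R \<in> CF_eps r \<epsilon> \<epsilon>h
       \<and> randomised_algorithm M d r \<Gamma> \<and> 0 \<le> p \<and> p < 1/2 \<longrightarrow>
       (\<exists>C2. uncountable C2 \<and> C2 \<subseteq> S f d (eps' r) \<and>
          (\<forall>T\<in>C2. length T = r \<and>
             argmin_eps \<epsilon> (NN d Ns) (\<lambda>\<phi>. R (map \<phi> T) (map f T)) \<noteq> {} \<and>
             (\<exists>Or. admissible_oracle d T Or \<and>
                (\<forall>\<phi>\<in>argmin_eps \<epsilon> (NN d Ns) (\<lambda>\<phi>. R (map \<phi> T) (map f T)).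
                   \<forall>nrm\<in>{lone, ltwo, linf}.
                     measure M {\<omega>\<in>space M. nrm (vsub (\<Gamma> \<omega> Or) (map \<phi> T)) \<ge> 1/4 - 3*\<epsilon>h/4} > p))))"
  proof (intro ballI allI impI)
    fix f and Ns :: "nat list" and r :: nat and \<epsilon> \<epsilon>h :: real and R and M :: "(nat \<Rightarrow> bool) measure"
      and \<Gamma> and p :: real
    assume f: "f \<in> C1"
      and H: "Ns \<noteq> [] \<and> (\<forall>n\<in>set Ns. 0 < n) \<and> r \<ge> 3 * prod_list (map Suc Ns)
       \<and> \<epsilon> > 0 \<and> 0 < \<epsilon>h \<and> \<epsilon>h < 1/2 \<and> R \<in> CF_eps r \<epsilon> \<epsilon>h
       \<and> randomised_algorithm M d r \<Gamma> \<and> 0 \<le> p \<and> p < 1/2"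
    from f obtain a where a: "a \<in> A" "f = fa a" unfolding C1_def by blast
    have a2: "1/2 < a" using a by (simp add: A_def)
    from H have H1: "Ns \<noteq> []" "\<forall>n\<in>set Ns. 0 < n" "r \<ge> 3 * prod_list (map Suc Ns)"
      "\<epsilon> > 0" "0 < \<epsilon>h" "\<epsilon>h < 1/2" "R \<in> CF_eps r \<epsilon> \<epsilon>h" "randomised_algorithm M d r \<Gamma>" "0 \<le> p" "p < 1/2"
      by auto
    show "\<exists>C2. uncountable C2 \<and> C2 \<subseteq> S f d (eps' r) \<and>
          (\<forall>T\<in>C2. length T = r \<and>
             argmin_eps \<epsilon> (NN d Ns) (\<lambda>\<phi>. R (map \<phi> T) (map f T)) \<noteq> {} \<and>
             (\<exists>Or. admissible_oracle d T Or \<and>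
                (\<forall>\<phi>\<in>argmin_eps \<epsilon> (NN d Ns) (\<lambda>\<phi>. R (map \<phi> T) (map f T)).
                   \<forall>nrm\<in>{lone, ltwo, linf}.
                     measure M {\<omega>\<in>space M. nrm (vsub (\<Gamma> \<omega> Or) (map \<phi> T)) \<ge> 1/4 - 3*\<epsilon>h/4} > p)))"
      unfolding a(2) by (rule main_f[OF assms a2 H1])
  qed
  show ?thesis using U Cl Main by blast
qed

end
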